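(* Let $(\rho_\varepsilon,u_\varepsilon)$ be a smooth solution of the approximating system (A) with $\rho_\varepsilon>0$, let $c>0$ and $v_\varepsilon=u_\varepsilon+c\nabla\phi_\varepsilon(\rho_\varepsilon)$. Then $(\rho_\varepsilon,v_\varepsilon)$ satisfies $$\partial_t\rho_\varepsilon+\operatorname{div}(\rho_\varepsilon v_\varepsilon)=c\Delta h_\varepsilon(\rho_\varepsilon),$$ $$\partial_t(\rho_\varepsilon v_\varepsilon)+\operatorname{div}(\rho_\varepsilon v_\varepsilon\otimes v_\varepsilon)+\nabla\rho_\varepsilon^\gamma+\tilde\lambda\nabla p_\varepsilon(\rho_\varepsilon)-c\Delta(h_\varepsilon(\rho_\varepsilon)v_\varepsilon)+\tilde p_\varepsilon(\rho_\varepsilon)v_\varepsilon-2(\nu-c)\operatorname{div}(h_\varepsilon(\rho_\varepsilon)Dv_\varepsilon)-(2\nu-c)\nabla(g_\varepsilon(\rho_\varepsilon)\operatorname{div}v_\varepsilon)-\tilde\kappa^2\operatorname{div}\mathbb K_\varepsilon=0,$$ where $\tilde\kappa^2=\kappa^2-2\nu c+c^2$ and $\tilde\lambda=(\mu-c)/\mu$.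
   Context: $d\in\{2,3\}$, $\mathbb T^d$ the flat torus. Let $\nu,\kappa>0$ with $\kappa<\nu$, $\gamma>1$, $\varepsilon>0$ small, $\mu=\nu-\sqrt{\nu^2-\kappa^2}$. For $\rho>0$: $h_\varepsilon(\rho)=\rho+\varepsilon\rho^{7/8}+\varepsilon\rho^\gamma$, $g_\varepsilon(\rho)=\rho h_\varepsilon'(\rho)-h_\varepsilon(\rho)$; $\phi_\varepsilon$ is any function with $\rho\phi_\varepsilon'(\rho)=h_\varepsilon'(\rho)$; $\lambda(\varepsilon)=e^{-1/\varepsilon^4}$; $\tilde p_\varepsilon(\rho)=\lambda(\varepsilon)(\rho^{1/\varepsilon^2}+\rho^{-1/\varepsilon^2})$; $p_\varepsilon$ is any function with $p_\varepsilon'(\rho)=\mu\tilde p_\varepsilon(\rho)h_\varepsilon'(\rho)/\rho$ (the paper takes the primitive that is a linear combination of powers of $\rho$). $Du=(\nabla u+\nabla u^T)/2$, $\mathbb S_\varepsilon=h_\varepsilon(\rho)Du+g_\varepsilon(\rho)\operatorname{div}u\,\mathbb I$, $\operatorname{div}\mathbb K_\varepsilon=2\rho\nabla\big(h_\varepsilon'(\rho)\operatorname{div}(h_\varepsilon'(\rho)\nabla\sqrt\rho)/\sqrt\rho\big)$ (evaluated at $\rho=\rho_\varepsilon$). System (A) is $$\partial_t\rho+\operatorname{div}(\rho u)=0,\quad \partial_t(\rho u)+\operatorname{div}(\rho u\otimes u)-2\nu\operatorname{div}\mathbb S_\varepsilon+\nabla(\rho^\gamma+p_\varepsilon(\rho))+\tilde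 p_\varepsilon(\rho)u=\kappa^2\operatorname{div}\mathbb K_\varepsilon.$$ *)

theory Defs
  imports "HOL-Analysis.Analysis"
begin

text \<open>Space-time fields on (time) x (R^d), with R^d = real^'n.
  The flat torus T^d is modelled by fields that are 1-periodic in each coordinate.\<close>

type_synonym ('n, 'b) field = "real \<Rightarrow> real^'n \<Rightarrow> 'b"

definition dt :: "('n, 'b::real_normed_vector) field \<Rightarrow> ('n, 'b) field" where
  "dt f = (\<lambda>t x. vector_derivative (\<lambda>s. f s x) (at t))"

definition pd :: "'n \<Rightarrow> ('n, 'b::real_normed_vector) field \<Rightarrow> ('n::finite, 'b) field" where
  "pd i f = (\<lambda>t x. vector_derivative (\<lambda>s. f t (x + s *\<^sub>R axis i 1)) (at 0))"

definition grad :: "('n::finite, real) field \<Rightarrow> ('n, real^'n) field" where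
  "grad f = (\<lambda>t x. \<chi> i. pd i f t x)"

definition divg :: "('n::finite, real^'n) field \<Rightarrow> ('n, real) field" where
  "divg U = (\<lambda>t x. \<Sum>i\<in>UNIV. pd i U t x $ i)"

definition divM :: "('n::finite, real^'n^'n) field \<Rightarrow> ('n, real^'n) field" where
  "divM M = (\<lambda>t x. \<chi> i. \<Sum>j\<in>UNIV. pd j M t x $ i $ j)"

definition lap :: "('n::finite, 'b::real_normed_vector) field \<Rightarrow> ('n, 'b) field" where
  "lap f = (\<lambda>t x. \<Sum>i\<in>UNIV. pd i (pd i f) t x)"

definition outer :: "real^'n \<Rightarrow> real^'n \<Rightarrow> real^'n^'n" where
  "outer a b = (\<chi> i j. a $ i * b $ j)"

definition symgrad :: "('n::finite, real^'n) field \<Rightarrow> ('n, real^'n^'n) field" where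
  "symgrad U = (\<lambda>t x. \<chi> i j. (pd j U t x $ i + pd i U t x $ j) / 2)"

text \<open>Smoothness (C-infinity) on the time set I times R^d, coinductively:
  jointly differentiable and all first partial derivatives again smooth.\<close>
coinductive smooth_st :: "real set \<Rightarrow> ('n::finite, 'b::real_normed_vector) field \<Rightarrow> bool"
  for I where
  "\<lbrakk>\<forall>t\<in>I. \<forall>x. (\<lambda>z. f (fst z) (snd z)) differentiable (at (t, x));
    smooth_st I (dt f); \<forall>i. smooth_st I (pd i f)\<rbrakk> \<Longrightarrow> smooth_st I f"

definition periodic_field :: "('n::finite, 'b) field \<Rightarrow> bool" where
  "periodic_field f \<longleftrightarrow> (\<forall>t x i. f t (x + axis i 1) = f t x)"

definition h_eps :: "real \<Rightarrow> real \<Rightarrow> real \<Rightarrow> real" where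
  "h_eps \<gamma> \<epsilon> r = r + \<epsilon> * r powr (7/8) + \<epsilon> * r powr \<gamma>"

definition hp_eps :: "real \<Rightarrow> real \<Rightarrow> real \<Rightarrow> real" where
  "hp_eps \<gamma> \<epsilon> r = deriv (h_eps \<gamma> \<epsilon>) r"

definition g_eps :: "real \<Rightarrow> real \<Rightarrow> real \<Rightarrow> real" where
  "g_eps \<gamma> \<epsilon> r = r * hp_eps \<gamma> \<epsilon> r - h_eps \<gamma> \<epsilon> r"

definition lam_eps :: "real \<Rightarrow> real" where
  "lam_eps \<epsilon> = exp (- 1 / \<epsilon> ^ 4)"

definition ptil_eps :: "real \<Rightarrow> real \<Rightarrow> real" where
  "ptil_eps \<epsilon> r = lam_eps \<epsilon> * (r powr (1 / \<epsilon>\<^sup>2) + r powr (- 1 / \<epsilon>\<^sup>2))"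

definition mu :: "real \<Rightarrow> real \<Rightarrow> real" where
  "mu \<nu> \<kappa> = \<nu> - sqrt (\<nu>\<^sup>2 - \<kappa>\<^sup>2)"

definition divK :: "real \<Rightarrow> real \<Rightarrow> ('n::finite, real) field \<Rightarrow> ('n, real^'n) field" where
  "divK \<gamma> \<epsilon> \<rho> =
    (let w = (\<lambda>t x. hp_eps \<gamma> \<epsilon> (\<rho> t x) *\<^sub>R grad (\<lambda>s y. sqrt (\<rho> s y)) t x);
         q = (\<lambda>t x. hp_eps \<gamma> \<epsilon> (\<rho> t x) * divg w t x / sqrt (\<rho> t x))
     in (\<lambda>t x. (2 * \<rho> t x) *\<^sub>R grad q t x))"

definition stress :: "real \<Rightarrow> real \<Rightarrow> ('n::finite, real) field \<Rightarrow> ('n, real^'n) field \<Rightarrow> ('n, real^'n^'n) field" where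
  "stress \<gamma> \<epsilon> \<rho> u = (\<lambda>t x. h_eps \<gamma> \<epsilon> (\<rho> t x) *\<^sub>R symgrad u t x
                              + (g_eps \<gamma> \<epsilon> (\<rho> t x) * divg u t x) *\<^sub>R mat 1)"

end

theory Submission
  imports Defs
begin


lemma deriv_line_shift:
  fixes F :: "'a::real_normed_vector \<Rightarrow> real"
  assumes "((\<lambda>\<tau>. F ((z + s *\<^sub>R a) + \<tau> *\<^sub>R a)) has_real_derivative L) (at 0)"
  shows "((\<lambda>\<sigma>. F (z + \<sigma> *\<^sub>R a)) has_real_derivative L) (at s)"
proof -
  have d: "((\<lambda>\<sigma>. \<sigma> - s) has_real_derivative 1) (at s)"
    by (auto intro!: derivative_eq_intros)
  have "((\<lambda>\<sigma>. F ((z + s *\<^sub>R a) + (\<sigma> - s) *\<^sub>R a)) has_real_derivative L * 1) (at s)"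
    using DERIV_chain2[OF _ d, of "\<lambda>\<tau>. F ((z + s *\<^sub>R a) + \<tau> *\<^sub>R a)" L] assms by simp
  moreover have "\<And>\<sigma>. (z + s *\<^sub>R a) + (\<sigma> - s) *\<^sub>R a = z + \<sigma> *\<^sub>R a"
    by (simp add: algebra_simps)
  ultimately show ?thesis by simp
qed

lemma in_ball_add: "norm v < d \<Longrightarrow> p + v \<in> ball p d"
  by (metis add_diff_cancel_left' dist_commute dist_norm mem_ball)

lemma schwarz_aux:
  fixes F :: "'a::real_normed_vector \<Rightarrow> real"
  assumes Fa: "\<And>z. z \<in> ball p d \<Longrightarrow> ((\<lambda>s. F (z + s *\<^sub>R a)) has_real_derivative Fa z) (at 0)"
    and DA: "\<And>y. norm (y - p) < d \<Longrightarrow> \<bar>Fa y - Fa p - DA (y - p)\<bar> \<le> e * norm (y - p)"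
    and lin: "linear DA" and e0: "0 \<le> e" and h: "0 < h" and hd: "h * (norm a + norm b) < d"
  shows "\<bar>(F (p + h *\<^sub>R a + h *\<^sub>R b) - F (p + h *\<^sub>R a) - F (p + h *\<^sub>R b) + F p) - h*h*DA b\<bar>
           \<le> 2 * e * h * (h * (norm a + norm b))"
proof -
  define g where "g s = F (p + h *\<^sub>R b + s *\<^sub>R a) - F (p + s *\<^sub>R a)" for s
  define g' where "g' s = Fa (p + h *\<^sub>R b + s *\<^sub>R a) - Fa (p + s *\<^sub>R a)" for s
  have nb: "norm (h *\<^sub>R b + s *\<^sub>R a) \<le> h * (norm a + norm b)"
    and nb2: "norm (s *\<^sub>R a) \<le> h * (norm a + norm b)" if "0 \<le> s" "s \<le> h" for s
  proof -
    have "norm (h *\<^sub>R b + s *\<^sub>R a) \<le> norm (h *\<^sub>R b) + norm (s *\<^sub>R a)" by (rule norm_triangle_ineq)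
    also have "\<dots> = h * norm b + s * norm a" using that h by simp
    also have "\<dots> \<le> h * norm b + h * norm a" using that by (simp add: mult_right_mono)
    finally show "norm (h *\<^sub>R b + s *\<^sub>R a) \<le> h * (norm a + norm b)" by (simp add: algebra_simps)
    have "norm (s *\<^sub>R a) = s * norm a" using that by simp
    also have "\<dots> \<le> h * norm a" using that by (simp add: mult_right_mono)
    also have "\<dots> \<le> h * (norm a + norm b)" using h by (simp add: algebra_simps)
    finally show "norm (s *\<^sub>R a) \<le> h * (norm a + norm b)" .
  qed
  have der: "(g has_real_derivative g' s) (at s)" if "0 \<le> s" "s \<le> h" for s
  proof -
    have i1: "p + h *\<^sub>R b + s *\<^sub>R a \<in> ball p d"
      using in_ball_add[of "h *\<^sub>R b + s *\<^sub>R a" d p] nb[OF that] hd by (simp add: add.assoc)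
    have i2: "p + s *\<^sub>R a \<in> ball p d"
      using in_ball_add[of "s *\<^sub>R a" d p] nb2[OF that] hd by simp
    have "((\<lambda>\<sigma>. F ((p + h *\<^sub>R b) + \<sigma> *\<^sub>R a)) has_real_derivative Fa (p + h *\<^sub>R b + s *\<^sub>R a)) (at s)"
      by (rule deriv_line_shift) (use Fa[OF i1] in simp)
    moreover have "((\<lambda>\<sigma>. F (p + \<sigma> *\<^sub>R a)) has_real_derivative Fa (p + s *\<^sub>R a)) (at s)"
      by (rule deriv_line_shift) (use Fa[OF i2] in simp)
    ultimately show ?thesis unfolding g_def g'_def
      by (intro derivative_eq_intros) auto
  qed
  obtain \<xi> where \<xi>: "0 < \<xi>" "\<xi> < h" "g h - g 0 = (h - 0) * g' \<xi>"
    using MVT2[OF h, of g g'] der by auto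
  have gdelta: "g h - g 0 = F (p + h *\<^sub>R a + h *\<^sub>R b) - F (p + h *\<^sub>R a) - F (p + h *\<^sub>R b) + F p"
    unfolding g_def by (simp add: algebra_simps)
  define y1 where "y1 = p + h *\<^sub>R b + \<xi> *\<^sub>R a"
  define y2 where "y2 = p + \<xi> *\<^sub>R a"
  have n1: "norm (y1 - p) \<le> h * (norm a + norm b)" using nb[of \<xi>] \<xi> by (simp add: y1_def)
  have n2: "norm (y2 - p) \<le> h * (norm a + norm b)" using nb2[of \<xi>] \<xi> by (simp add: y2_def)
  have e1: "\<bar>Fa y1 - Fa p - DA (y1 - p)\<bar> \<le> e * norm (y1 - p)" using DA n1 hd by auto
  have e2: "\<bar>Fa y2 - Fa p - DA (y2 - p)\<bar> \<le> e * norm (y2 - p)" using DA n2 hd by auto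
  have lin2: "DA (y1 - p) - DA (y2 - p) = h * DA b"
  proof -
    have "DA (y1 - p) - DA (y2 - p) = DA ((y1 - p) - (y2 - p))" using lin by (simp add: linear_diff)
    also have "(y1 - p) - (y2 - p) = h *\<^sub>R b" by (simp add: y1_def y2_def)
    also have "DA (h *\<^sub>R b) = h * DA b" using lin by (simp add: linear_scale)
    finally show ?thesis .
  qed
  have "g' \<xi> - h * DA b = (Fa y1 - Fa p - DA (y1 - p)) - (Fa y2 - Fa p - DA (y2 - p))"
    unfolding g'_def y1_def[symmetric] y2_def[symmetric] using lin2 by simp
  hence "\<bar>g' \<xi> - h * DA b\<bar> \<le> e * norm (y1 - p) + e * norm (y2 - p)"
    using e1 e2 by linarith
  also have "\<dots> \<le> e * (h * (norm a + norm b)) + e * (h * (norm a + norm b))"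
    using n1 n2 e0 by (intro add_mono mult_left_mono) auto
  finally have gb: "\<bar>g' \<xi> - h * DA b\<bar> \<le> 2 * e * (h * (norm a + norm b))" by simp
  have "(g h - g 0) - h*h*DA b = h * (g' \<xi> - h * DA b)"
    using \<xi>(3) by (simp add: algebra_simps)
  hence "\<bar>(g h - g 0) - h*h*DA b\<bar> = h * \<bar>g' \<xi> - h * DA b\<bar>"
    using h by (simp add: abs_mult)
  also have "\<dots> \<le> h * (2 * e * (h * (norm a + norm b)))"
    using gb h by (simp add: mult_left_mono)
  finally show ?thesis using gdelta by (simp add: algebra_simps)
qed
lemma schwarz:
  fixes F :: "'a::real_normed_vector \<Rightarrow> real"
  assumes S: "open S" "p \<in> S"
    and Fa: "\<And>z. z \<in> S \<Longrightarrow> ((\<lambda>s. F (z + s *\<^sub>R a)) has_real_derivative Fa z) (at 0)"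
    and Fb: "\<And>z. z \<in> S \<Longrightarrow> ((\<lambda>s. F (z + s *\<^sub>R b)) has_real_derivative Fb z) (at 0)"
    and DA: "(Fa has_derivative DA) (at p)" and DB: "(Fb has_derivative DB) (at p)"
  shows "DA b = DB a"
proof (rule ccontr)
  assume ne: "DA b \<noteq> DB a"
  define \<delta> where "\<delta> = \<bar>DA b - DB a\<bar>"
  have \<delta>: "0 < \<delta>" using ne by (simp add: \<delta>_def)
  define M where "M = norm a + norm b"
  have M0: "0 \<le> M" by (simp add: M_def)
  define e where "e = \<delta> / (8 * (M + 1))"
  have e: "0 < e" using \<delta> M0 by (simp add: e_def)
  obtain d0 where d0: "0 < d0" "ball p d0 \<subseteq> S" using S open_contains_ball by blast
  have la: "linear DA" using DA has_derivative_linear by blast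
  have lb: "linear DB" using DB has_derivative_linear by blast
  obtain d1 where d1: "0 < d1" "\<And>y. norm (y - p) < d1 \<Longrightarrow> norm (Fa y - Fa p - DA (y - p)) \<le> e * norm (y - p)"
    using DA e unfolding has_derivative_at_alt by blast
  obtain d2 where d2: "0 < d2" "\<And>y. norm (y - p) < d2 \<Longrightarrow> norm (Fb y - Fb p - DB (y - p)) \<le> e * norm (y - p)"
    using DB e unfolding has_derivative_at_alt by blast
  define d where "d = min d0 (min d1 d2)"
  have d: "0 < d" using d0 d1 d2 by (simp add: d_def)
  define h where "h = d / (2 * (M + 1))"
  have h: "0 < h" using d M0 by (simp add: h_def)
  have hM: "h * M < d"
  proof -
    have "h * M \<le> h * (M + 1)" using h by simp
    also have "\<dots> = d / 2" using M0 by (simp add: h_def field_simps)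
    finally show ?thesis using d by simp
  qed
  have A: "\<bar>(F (p + h *\<^sub>R a + h *\<^sub>R b) - F (p + h *\<^sub>R a) - F (p + h *\<^sub>R b) + F p) - h*h*DA b\<bar>
           \<le> 2 * e * h * (h * (norm a + norm b))"
    by (rule schwarz_aux[where Fa=Fa and d=d]) (use Fa d0 d1 d_def la e h hM M_def in auto)
  have B: "\<bar>(F (p + h *\<^sub>R b + h *\<^sub>R a) - F (p + h *\<^sub>R b) - F (p + h *\<^sub>R a) + F p) - h*h*DB a\<bar>
           \<le> 2 * e * h * (h * (norm b + norm a))"
    by (rule schwarz_aux[where Fa=Fb and d=d]) (use Fb d0 d2 d_def lb e h hM M_def in \<open>auto simp: add.commute\<close>)
  have eq: "p + h *\<^sub>R b + h *\<^sub>R a = p + h *\<^sub>R a + h *\<^sub>R b" by (simp add: algebra_simps)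
  define X where "X = F (p + h *\<^sub>R a + h *\<^sub>R b) - F (p + h *\<^sub>R a) - F (p + h *\<^sub>R b) + F p"
  have A': "\<bar>X - h*h*DA b\<bar> \<le> 2 * e * h * (h * M)" using A by (simp add: X_def M_def)
  have B': "\<bar>X - h*h*DB a\<bar> \<le> 2 * e * h * (h * M)" using B unfolding eq
    by (simp add: X_def M_def add.commute algebra_simps)
  have hh: "h*h*\<delta> = \<bar>(X - h*h*DB a) - (X - h*h*DA b)\<bar>"
    using h by (simp add: \<delta>_def abs_mult right_diff_distrib[symmetric] abs_minus_commute)
  have "h*h*\<delta> \<le> 4 * e * h * (h * M)"
    unfolding hh using A' B' by linarith
  also have "\<dots> = h * h * (\<delta> * M / (2 * (M + 1)))" using M0 by (simp add: e_def field_simps)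
  also have "\<dots> < h * h * \<delta>"
  proof -
    have "M / (2 * (M + 1)) < 1" using M0 by (simp add: field_simps)
    hence "\<delta> * (M / (2 * (M + 1))) < \<delta> * 1" using \<delta> by (intro mult_strict_left_mono) auto
    hence "\<delta> * M / (2 * (M + 1)) < \<delta>" by simp
    moreover have "0 < h * h" using h by simp
    ultimately show ?thesis by (rule mult_strict_left_mono)
  qed
  finally show False by simp
qed


definition dat :: "('n::finite, 'b::real_normed_vector) field \<Rightarrow> real \<Rightarrow> real^'n \<Rightarrow> bool" where
  "dat f t x \<longleftrightarrow> (\<lambda>z. f (fst z) (snd z)) differentiable (at (t, x))"

definition fd :: "('n::finite, 'b::real_normed_vector) field \<Rightarrow> real \<Rightarrow> real^'n \<Rightarrow> real \<times> (real^'n) \<Rightarrow> 'b" where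
  "fd f t x = frechet_derivative (\<lambda>z. f (fst z) (snd z)) (at (t, x))"

lemma dat_has: "dat f t x \<Longrightarrow> ((\<lambda>z. f (fst z) (snd z)) has_derivative fd f t x) (at (t, x))"
  unfolding dat_def fd_def using frechet_derivative_works by blast

lemma pd_line:
  fixes f :: "('n::finite, 'b::real_normed_vector) field"
  assumes D: "((\<lambda>z. f (fst z) (snd z)) has_derivative D) (at (t, x))"
  shows "((\<lambda>s. f t (x + s *\<^sub>R axis i 1)) has_vector_derivative D (0, axis i 1)) (at 0)"
proof -
  have l: "((\<lambda>s::real. (t, x + s *\<^sub>R axis i (1::real))) has_derivative (\<lambda>s. (0, s *\<^sub>R axis i 1))) (at 0)"
    by (auto intro!: derivative_eq_intros)
  have D': "((\<lambda>z. f (fst z) (snd z)) has_derivative D) (at ((\<lambda>s::real. (t, x + s *\<^sub>R axis i (1::real))) 0))"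
    using D by simp
  have c: "((\<lambda>s. f t (x + s *\<^sub>R axis i 1)) has_derivative (\<lambda>s. D (0, s *\<^sub>R axis i 1))) (at 0)"
    using has_derivative_compose[OF l D'] by simp
  have lin: "linear D" using D has_derivative_linear by blast
  have "\<And>s. D (0, s *\<^sub>R axis i 1) = s *\<^sub>R D (0, axis i 1)"
  proof -
    fix s :: real
    have "(0::real, s *\<^sub>R axis i (1::real)) = s *\<^sub>R (0, axis i 1)" by simp
    hence "D (0, s *\<^sub>R axis i 1) = D (s *\<^sub>R (0, axis i 1))" by simp
    also have "\<dots> = s *\<^sub>R D (0, axis i 1)" by (rule linear_scale[OF lin])
    finally show "D (0, s *\<^sub>R axis i 1) = s *\<^sub>R D (0, axis i 1)" .
  qed
  thus ?thesis using c unfolding has_vector_derivative_def by simp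
qed

lemma pd_has:
  fixes f :: "('n::finite, 'b::real_normed_vector) field"
  assumes D: "((\<lambda>z. f (fst z) (snd z)) has_derivative D) (at (t, x))"
  shows "pd i f t x = D (0, axis i 1)"
  unfolding pd_def using pd_line[OF D] by (simp add: vector_derivative_at)

lemma dt_line:
  fixes f :: "('n::finite, 'b::real_normed_vector) field"
  assumes D: "((\<lambda>z. f (fst z) (snd z)) has_derivative D) (at (t, x))"
  shows "((\<lambda>s. f s x) has_vector_derivative D (1, 0)) (at t)"
proof -
  have l: "((\<lambda>s::real. (s, x)) has_derivative (\<lambda>s. (s, 0))) (at t)"
    by (rule has_derivative_Pair[OF has_derivative_ident has_derivative_const])
  have D': "((\<lambda>z. f (fst z) (snd z)) has_derivative D) (at ((\<lambda>s::real. (s, x)) t))"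
    using D by simp
  have c: "((\<lambda>s. f s x) has_derivative (\<lambda>s. D (s, 0))) (at t)"
    using has_derivative_compose[OF l D'] by simp
  have lin: "linear D" using D has_derivative_linear by blast
  have eq: "\<And>s. D (s, 0) = s *\<^sub>R D (1, 0)"
  proof -
    fix s :: real
    have "(s, 0::real^'n) = s *\<^sub>R (1, 0)" by simp
    hence "D (s, 0) = D (s *\<^sub>R (1, 0))" by simp
    also have "\<dots> = s *\<^sub>R D (1, 0)" by (rule linear_scale[OF lin])
    finally show "D (s, 0) = s *\<^sub>R D (1, 0)" .
  qed
  have "(\<lambda>s. D (s, 0)) = (\<lambda>s. s *\<^sub>R D (1, 0))" using eq by (rule ext)
  thus ?thesis using c unfolding has_vector_derivative_def by metis
qed

lemma dt_has:
  fixes f :: "('n::finite, 'b::real_normed_vector) field"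
  assumes D: "((\<lambda>z. f (fst z) (snd z)) has_derivative D) (at (t, x))"
  shows "dt f t x = D (1, 0)"
  unfolding dt_def using dt_line[OF D] by (simp add: vector_derivative_at)

lemma pd_fd: "dat f t x \<Longrightarrow> pd i f t x = fd f t x (0, axis i 1)"
  using pd_has[of f "fd f t x" t x i] dat_has[of f t x] by blast

lemma dt_fd: "dat f t x \<Longrightarrow> dt f t x = fd f t x (1, 0)"
  using dt_has[of f "fd f t x" t x] dat_has[of f t x] by blast

lemma pd_slice: "(\<And>y. f t y = g t y) \<Longrightarrow> pd i f t x = pd i g t x"
  unfolding pd_def by simp

lemma dt_cong:
  assumes "open I" "t \<in> I" "\<And>s. s \<in> I \<Longrightarrow> f s x = g s x"
  shows "dt f t x = dt g t x"
proof -
  have "eventually (\<lambda>s. s \<in> UNIV \<longrightarrow> f s x = g s x) (nhds t)"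
    unfolding eventually_nhds using assms by blast
  thus ?thesis unfolding dt_def using vector_derivative_cong_eq[where f="\<lambda>s. f s x" and A=UNIV and g="\<lambda>s. g s x" and x=t and y=t and B=UNIV] by simp
qed

lemma dat_cong:
  assumes "open I" "t \<in> I" "\<And>s y. s \<in> I \<Longrightarrow> f s y = g s y" "dat g t x"
  shows "dat f t x"
proof -
  obtain D where D: "((\<lambda>z. g (fst z) (snd z)) has_derivative D) (at (t, x))"
    using assms(4) unfolding dat_def differentiable_def by blast
  have "((\<lambda>z. f (fst z) (snd z)) has_derivative D) (at (t, x))"
    by (rule has_derivative_transform_within_open[OF D, of "I \<times> UNIV"])
       (use assms in \<open>auto intro: open_Times\<close>)
  thus ?thesis unfolding dat_def differentiable_def by blast
qed

lemma sm_dat: "smooth_st I f \<Longrightarrow> t \<in> I \<Longrightarrow> dat f t x"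
  unfolding dat_def by (erule smooth_st.cases) auto

lemma sm_pd: "smooth_st I f \<Longrightarrow> smooth_st I (pd i f)"
  by (erule smooth_st.cases) auto

lemma sm_dt: "smooth_st I f \<Longrightarrow> smooth_st I (dt f)"
  by (erule smooth_st.cases) auto

lemma pd_comm:
  fixes f :: "('n::finite, real) field"
  assumes I: "open I" "t \<in> I" and f: "\<And>s y. s \<in> I \<Longrightarrow> dat f s y"
    and fi: "dat (pd i f) t x" and fj: "dat (pd j f) t x"
  shows "pd j (pd i f) t x = pd i (pd j f) t x"
proof -
  have "fd (pd i f) t x (0, axis j 1) = fd (pd j f) t x (0, axis i 1)"
  proof (rule schwarz[where S="I \<times> UNIV" and p="(t,x)" and F="\<lambda>z. f (fst z) (snd z)"
        and Fa="\<lambda>z. pd i f (fst z) (snd z)" and Fb="\<lambda>z. pd j f (fst z) (snd z)"])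
    show "open (I \<times> (UNIV :: (real^'n) set))" using I by (auto intro: open_Times)
    show "(t, x) \<in> I \<times> UNIV" using I by auto
    show "((\<lambda>z. pd i f (fst z) (snd z)) has_derivative fd (pd i f) t x) (at (t, x))"
      using dat_has[OF fi] .
    show "((\<lambda>z. pd j f (fst z) (snd z)) has_derivative fd (pd j f) t x) (at (t, x))"
      using dat_has[OF fj] .
  next
    fix z :: "real \<times> (real^'n)" assume "z \<in> I \<times> UNIV"
    then obtain s y where z: "z = (s, y)" "s \<in> I" by auto
    have "((\<lambda>\<sigma>. f s (y + \<sigma> *\<^sub>R axis i 1)) has_vector_derivative pd i f s y) (at 0)"
      using pd_line[OF dat_has[OF f[OF z(2)]]] pd_fd[OF f[OF z(2)]] by simp
    thus "((\<lambda>\<sigma>. f (fst (z + \<sigma> *\<^sub>R (0, axis i 1))) (snd (z + \<sigma> *\<^sub>R (0, axis i 1)))) has_real_derivative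
          pd i f (fst z) (snd z)) (at 0)"
      using z by (simp add: has_real_derivative_iff_has_vector_derivative)
  next
    fix z :: "real \<times> (real^'n)" assume "z \<in> I \<times> UNIV"
    then obtain s y where z: "z = (s, y)" "s \<in> I" by auto
    have "((\<lambda>\<sigma>. f s (y + \<sigma> *\<^sub>R axis j 1)) has_vector_derivative pd j f s y) (at 0)"
      using pd_line[OF dat_has[OF f[OF z(2)]]] pd_fd[OF f[OF z(2)]] by simp
    thus "((\<lambda>\<sigma>. f (fst (z + \<sigma> *\<^sub>R (0, axis j 1))) (snd (z + \<sigma> *\<^sub>R (0, axis j 1)))) has_real_derivative
          pd j f (fst z) (snd z)) (at 0)"
      using z by (simp add: has_real_derivative_iff_has_vector_derivative)
  qed
  thus ?thesis using pd_fd[OF fi] pd_fd[OF fj] by simp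
qed

lemma dt_pd_comm:
  fixes f :: "('n::finite, real) field"
  assumes I: "open I" "t \<in> I" and f: "\<And>s y. s \<in> I \<Longrightarrow> dat f s y"
    and fi: "dat (pd i f) t x" and ft: "dat (dt f) t x"
  shows "dt (pd i f) t x = pd i (dt f) t x"
proof -
  have "fd (pd i f) t x (1, 0) = fd (dt f) t x (0, axis i 1)"
  proof (rule schwarz[where S="I \<times> UNIV" and p="(t,x)" and F="\<lambda>z. f (fst z) (snd z)"
        and Fa="\<lambda>z. pd i f (fst z) (snd z)" and Fb="\<lambda>z. dt f (fst z) (snd z)"])
    show "open (I \<times> (UNIV :: (real^'n) set))" using I by (auto intro: open_Times)
    show "(t, x) \<in> I \<times> UNIV" using I by auto
    show "((\<lambda>z. pd i f (fst z) (snd z)) has_derivative fd (pd i f) t x) (at (t, x))"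
      using dat_has[OF fi] .
    show "((\<lambda>z. dt f (fst z) (snd z)) has_derivative fd (dt f) t x) (at (t, x))"
      using dat_has[OF ft] .
  next
    fix z :: "real \<times> (real^'n)" assume "z \<in> I \<times> UNIV"
    then obtain s y where z: "z = (s, y)" "s \<in> I" by auto
    have "((\<lambda>\<sigma>. f s (y + \<sigma> *\<^sub>R axis i 1)) has_vector_derivative pd i f s y) (at 0)"
      using pd_line[OF dat_has[OF f[OF z(2)]]] pd_fd[OF f[OF z(2)]] by simp
    thus "((\<lambda>\<sigma>. f (fst (z + \<sigma> *\<^sub>R (0, axis i 1))) (snd (z + \<sigma> *\<^sub>R (0, axis i 1)))) has_real_derivative
          pd i f (fst z) (snd z)) (at 0)"
      using z by (simp add: has_real_derivative_iff_has_vector_derivative)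
  next
    fix z :: "real \<times> (real^'n)" assume "z \<in> I \<times> UNIV"
    then obtain s y where z: "z = (s, y)" "s \<in> I" by auto
    have "((\<lambda>\<sigma>. f \<sigma> y) has_vector_derivative dt f s y) (at s)"
      using dt_line[OF dat_has[OF f[OF z(2)]]] dt_fd[OF f[OF z(2)]] by simp
    hence "((\<lambda>\<sigma>. f \<sigma> y) has_real_derivative dt f s y) (at s)"
      by (simp add: has_real_derivative_iff_has_vector_derivative)
    hence "((\<lambda>\<sigma>. f (s + \<sigma>) y) has_real_derivative dt f s y) (at 0)"
      using DERIV_shift[of "\<lambda>\<sigma>. f \<sigma> y" "dt f s y" 0 s] by (simp add: add.commute)
    thus "((\<lambda>\<sigma>. f (fst (z + \<sigma> *\<^sub>R (1, 0))) (snd (z + \<sigma> *\<^sub>R (1, 0)))) has_real_derivative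
          dt f (fst z) (snd z)) (at 0)"
      using z by simp
  qed
  thus ?thesis using pd_fd[OF ft] dt_fd[OF fi] by simp
qed


lemma pd_add:
  assumes "dat f t x" and "dat g t x"
  shows "pd i (\<lambda>s y. f s y + g s y) t x = pd i f t x + pd i g t x"
proof -
  have "((\<lambda>z. (\<lambda>s y. f s y + g s y) (fst z) (snd z)) has_derivative (\<lambda>h. fd f t x h + fd g t x h)) (at (t, x))"
    using dat_has[OF assms(1)] dat_has[OF assms(2)] by (rule has_derivative_add)
  from pd_has[OF this] show ?thesis using pd_fd[OF assms(1)] pd_fd[OF assms(2)] by simp
qed

lemma dt_add:
  assumes "dat f t x" and "dat g t x"
  shows "dt (\<lambda>s y. f s y + g s y) t x = dt f t x + dt g t x"
proof -
  have "((\<lambda>z. (\<lambda>s y. f s y + g s y) (fst z) (snd z)) has_derivative (\<lambda>h. fd f t x h + fd g t x h)) (at (t, x))"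
    using dat_has[OF assms(1)] dat_has[OF assms(2)] by (rule has_derivative_add)
  from dt_has[OF this] show ?thesis using dt_fd[OF assms(1)] dt_fd[OF assms(2)] by simp
qed

lemma dat_add:
  assumes "dat f t x" and "dat g t x"
  shows "dat (\<lambda>s y. f s y + g s y) t x"
proof -
  have "((\<lambda>z. (\<lambda>s y. f s y + g s y) (fst z) (snd z)) has_derivative (\<lambda>h. fd f t x h + fd g t x h)) (at (t, x))"
    using dat_has[OF assms(1)] dat_has[OF assms(2)] by (rule has_derivative_add)
  thus ?thesis unfolding dat_def differentiable_def by blast
qed

lemma pd_diff:
  assumes "dat f t x" and "dat g t x"
  shows "pd i (\<lambda>s y. f s y - g s y) t x = pd i f t x - pd i g t x"
proof -
  have "((\<lambda>z. (\<lambda>s y. f s y - g s y) (fst z) (snd z)) has_derivative (\<lambda>h. fd f t x h - fd g t x h)) (at (t, x))"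
    using dat_has[OF assms(1)] dat_has[OF assms(2)] by (rule has_derivative_diff)
  from pd_has[OF this] show ?thesis using pd_fd[OF assms(1)] pd_fd[OF assms(2)] by simp
qed

lemma dt_diff:
  assumes "dat f t x" and "dat g t x"
  shows "dt (\<lambda>s y. f s y - g s y) t x = dt f t x - dt g t x"
proof -
  have "((\<lambda>z. (\<lambda>s y. f s y - g s y) (fst z) (snd z)) has_derivative (\<lambda>h. fd f t x h - fd g t x h)) (at (t, x))"
    using dat_has[OF assms(1)] dat_has[OF assms(2)] by (rule has_derivative_diff)
  from dt_has[OF this] show ?thesis using dt_fd[OF assms(1)] dt_fd[OF assms(2)] by simp
qed

lemma dat_diff:
  assumes "dat f t x" and "dat g t x"
  shows "dat (\<lambda>s y. f s y - g s y) t x"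
proof -
  have "((\<lambda>z. (\<lambda>s y. f s y - g s y) (fst z) (snd z)) has_derivative (\<lambda>h. fd f t x h - fd g t x h)) (at (t, x))"
    using dat_has[OF assms(1)] dat_has[OF assms(2)] by (rule has_derivative_diff)
  thus ?thesis unfolding dat_def differentiable_def by blast
qed

lemma pd_cscale:
  assumes "dat f t x"
  shows "pd i (\<lambda>s y. c *\<^sub>R f s y) t x = c *\<^sub>R pd i f t x"
proof -
  have "((\<lambda>z. (\<lambda>s y. c *\<^sub>R f s y) (fst z) (snd z)) has_derivative (\<lambda>h. c *\<^sub>R fd f t x h)) (at (t, x))"
    using dat_has[OF assms(1)] by (rule has_derivative_scaleR_right)
  from pd_has[OF this] show ?thesis using pd_fd[OF assms(1)] by simp
qed

lemma dt_cscale: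
  assumes "dat f t x"
  shows "dt (\<lambda>s y. c *\<^sub>R f s y) t x = c *\<^sub>R dt f t x"
proof -
  have "((\<lambda>z. (\<lambda>s y. c *\<^sub>R f s y) (fst z) (snd z)) has_derivative (\<lambda>h. c *\<^sub>R fd f t x h)) (at (t, x))"
    using dat_has[OF assms(1)] by (rule has_derivative_scaleR_right)
  from dt_has[OF this] show ?thesis using dt_fd[OF assms(1)] by simp
qed

lemma dat_cscale:
  assumes "dat f t x"
  shows "dat (\<lambda>s y. c *\<^sub>R f s y) t x"
proof -
  have "((\<lambda>z. (\<lambda>s y. c *\<^sub>R f s y) (fst z) (snd z)) has_derivative (\<lambda>h. c *\<^sub>R fd f t x h)) (at (t, x))"
    using dat_has[OF assms(1)] by (rule has_derivative_scaleR_right)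
  thus ?thesis unfolding dat_def differentiable_def by blast
qed

lemma pd_cmult:
  fixes f :: "('n::finite, real) field"
  assumes "dat f t x"
  shows "pd i (\<lambda>s y. c * f s y) t x = c * pd i f t x"
proof -
  have "((\<lambda>z. (\<lambda>s y. c * f s y) (fst z) (snd z)) has_derivative (\<lambda>h. c * fd f t x h)) (at (t, x))"
    using dat_has[OF assms(1)] by (rule has_derivative_mult_right)
  from pd_has[OF this] show ?thesis using pd_fd[OF assms(1)] by simp
qed

lemma dt_cmult:
  fixes f :: "('n::finite, real) field"
  assumes "dat f t x"
  shows "dt (\<lambda>s y. c * f s y) t x = c * dt f t x"
proof -
  have "((\<lambda>z. (\<lambda>s y. c * f s y) (fst z) (snd z)) has_derivative (\<lambda>h. c * fd f t x h)) (at (t, x))"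
    using dat_has[OF assms(1)] by (rule has_derivative_mult_right)
  from dt_has[OF this] show ?thesis using dt_fd[OF assms(1)] by simp
qed

lemma dat_cmult:
  fixes f :: "('n::finite, real) field"
  assumes "dat f t x"
  shows "dat (\<lambda>s y. c * f s y) t x"
proof -
  have "((\<lambda>z. (\<lambda>s y. c * f s y) (fst z) (snd z)) has_derivative (\<lambda>h. c * fd f t x h)) (at (t, x))"
    using dat_has[OF assms(1)] by (rule has_derivative_mult_right)
  thus ?thesis unfolding dat_def differentiable_def by blast
qed

lemma pd_mult:
  fixes f g :: "('n::finite, real) field"
  assumes "dat f t x" and "dat g t x"
  shows "pd i (\<lambda>s y. f s y * g s y) t x = f t x * pd i g t x + pd i f t x * g t x"
proof -
  have "((\<lambda>z. (\<lambda>s y. f s y * g s y) (fst z) (snd z)) has_derivative (\<lambda>h. f t x * fd g t x h + fd f t x h * g t x)) (at (t, x))"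
    using has_derivative_mult[OF dat_has[OF assms(1)] dat_has[OF assms(2)]] by simp
  from pd_has[OF this] show ?thesis using pd_fd[OF assms(1)] pd_fd[OF assms(2)] by simp
qed

lemma dt_mult:
  fixes f g :: "('n::finite, real) field"
  assumes "dat f t x" and "dat g t x"
  shows "dt (\<lambda>s y. f s y * g s y) t x = f t x * dt g t x + dt f t x * g t x"
proof -
  have "((\<lambda>z. (\<lambda>s y. f s y * g s y) (fst z) (snd z)) has_derivative (\<lambda>h. f t x * fd g t x h + fd f t x h * g t x)) (at (t, x))"
    using has_derivative_mult[OF dat_has[OF assms(1)] dat_has[OF assms(2)]] by simp
  from dt_has[OF this] show ?thesis using dt_fd[OF assms(1)] dt_fd[OF assms(2)] by simp
qed

lemma dat_mult:
  fixes f g :: "('n::finite, real) field"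
  assumes "dat f t x" and "dat g t x"
  shows "dat (\<lambda>s y. f s y * g s y) t x"
proof -
  have "((\<lambda>z. (\<lambda>s y. f s y * g s y) (fst z) (snd z)) has_derivative (\<lambda>h. f t x * fd g t x h + fd f t x h * g t x)) (at (t, x))"
    using has_derivative_mult[OF dat_has[OF assms(1)] dat_has[OF assms(2)]] by simp
  thus ?thesis unfolding dat_def differentiable_def by blast
qed

lemma pd_scaleR:
  fixes f :: "('n::finite, real) field"
  assumes "dat f t x" and "dat g t x"
  shows "pd i (\<lambda>s y. f s y *\<^sub>R g s y) t x = f t x *\<^sub>R pd i g t x + pd i f t x *\<^sub>R g t x"
proof -
  have "((\<lambda>z. (\<lambda>s y. f s y *\<^sub>R g s y) (fst z) (snd z)) has_derivative (\<lambda>h. f t x *\<^sub>R fd g t x h + fd f t x h *\<^sub>R g t x)) (at (t, x))"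
    using has_derivative_scaleR[OF dat_has[OF assms(1)] dat_has[OF assms(2)]] by simp
  from pd_has[OF this] show ?thesis using pd_fd[OF assms(1)] pd_fd[OF assms(2)] by simp
qed

lemma dt_scaleR:
  fixes f :: "('n::finite, real) field"
  assumes "dat f t x" and "dat g t x"
  shows "dt (\<lambda>s y. f s y *\<^sub>R g s y) t x = f t x *\<^sub>R dt g t x + dt f t x *\<^sub>R g t x"
proof -
  have "((\<lambda>z. (\<lambda>s y. f s y *\<^sub>R g s y) (fst z) (snd z)) has_derivative (\<lambda>h. f t x *\<^sub>R fd g t x h + fd f t x h *\<^sub>R g t x)) (at (t, x))"
    using has_derivative_scaleR[OF dat_has[OF assms(1)] dat_has[OF assms(2)]] by simp
  from dt_has[OF this] show ?thesis using dt_fd[OF assms(1)] dt_fd[OF assms(2)] by simp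
qed

lemma dat_scaleR:
  fixes f :: "('n::finite, real) field"
  assumes "dat f t x" and "dat g t x"
  shows "dat (\<lambda>s y. f s y *\<^sub>R g s y) t x"
proof -
  have "((\<lambda>z. (\<lambda>s y. f s y *\<^sub>R g s y) (fst z) (snd z)) has_derivative (\<lambda>h. f t x *\<^sub>R fd g t x h + fd f t x h *\<^sub>R g t x)) (at (t, x))"
    using has_derivative_scaleR[OF dat_has[OF assms(1)] dat_has[OF assms(2)]] by simp
  thus ?thesis unfolding dat_def differentiable_def by blast
qed

lemma pd_nth:
  fixes f :: "('n::finite, ('b::real_normed_vector)^'m::finite) field"
  assumes "dat f t x"
  shows "pd i (\<lambda>s y. f s y $ k) t x = pd i f t x $ k"
proof -
  have "((\<lambda>z. (\<lambda>s y. f s y $ k) (fst z) (snd z)) has_derivative (\<lambda>h. fd f t x h $ k)) (at (t, x))"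
    using dat_has[OF assms(1)] by (rule bounded_linear.has_derivative[OF bounded_linear_vec_nth])
  from pd_has[OF this] show ?thesis using pd_fd[OF assms(1)] by simp
qed

lemma dt_nth:
  fixes f :: "('n::finite, ('b::real_normed_vector)^'m::finite) field"
  assumes "dat f t x"
  shows "dt (\<lambda>s y. f s y $ k) t x = dt f t x $ k"
proof -
  have "((\<lambda>z. (\<lambda>s y. f s y $ k) (fst z) (snd z)) has_derivative (\<lambda>h. fd f t x h $ k)) (at (t, x))"
    using dat_has[OF assms(1)] by (rule bounded_linear.has_derivative[OF bounded_linear_vec_nth])
  from dt_has[OF this] show ?thesis using dt_fd[OF assms(1)] by simp
qed

lemma dat_nth:
  fixes f :: "('n::finite, ('b::real_normed_vector)^'m::finite) field"
  assumes "dat f t x"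
  shows "dat (\<lambda>s y. f s y $ k) t x"
proof -
  have "((\<lambda>z. (\<lambda>s y. f s y $ k) (fst z) (snd z)) has_derivative (\<lambda>h. fd f t x h $ k)) (at (t, x))"
    using dat_has[OF assms(1)] by (rule bounded_linear.has_derivative[OF bounded_linear_vec_nth])
  thus ?thesis unfolding dat_def differentiable_def by blast
qed

lemma pd_comp:
  fixes f :: "('n::finite, real) field"
  assumes "dat f t x" and "(F has_real_derivative F') (at (f t x))"
  shows "pd i (\<lambda>s y. F (f s y)) t x = F' * pd i f t x"
proof -
  have "((\<lambda>z. (\<lambda>s y. F (f s y)) (fst z) (snd z)) has_derivative (\<lambda>h. F' * fd f t x h)) (at (t, x))"
    using has_derivative_compose[OF dat_has[OF assms(1)], of F "(*) F'"] assms(2) by (simp add: has_field_derivative_def mult.commute)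
  from pd_has[OF this] show ?thesis using pd_fd[OF assms(1)] by simp
qed

lemma dt_comp:
  fixes f :: "('n::finite, real) field"
  assumes "dat f t x" and "(F has_real_derivative F') (at (f t x))"
  shows "dt (\<lambda>s y. F (f s y)) t x = F' * dt f t x"
proof -
  have "((\<lambda>z. (\<lambda>s y. F (f s y)) (fst z) (snd z)) has_derivative (\<lambda>h. F' * fd f t x h)) (at (t, x))"
    using has_derivative_compose[OF dat_has[OF assms(1)], of F "(*) F'"] assms(2) by (simp add: has_field_derivative_def mult.commute)
  from dt_has[OF this] show ?thesis using dt_fd[OF assms(1)] by simp
qed

lemma dat_comp:
  fixes f :: "('n::finite, real) field"
  assumes "dat f t x" and "(F has_real_derivative F') (at (f t x))"
  shows "dat (\<lambda>s y. F (f s y)) t x"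
proof -
  have "((\<lambda>z. (\<lambda>s y. F (f s y)) (fst z) (snd z)) has_derivative (\<lambda>h. F' * fd f t x h)) (at (t, x))"
    using has_derivative_compose[OF dat_has[OF assms(1)], of F "(*) F'"] assms(2) by (simp add: has_field_derivative_def mult.commute)
  thus ?thesis unfolding dat_def differentiable_def by blast
qed

lemma pd_sum:
  assumes "finite A" "\<And>k. k \<in> A \<Longrightarrow> dat (f k) t x"
  shows "pd i (\<lambda>s y. \<Sum>k\<in>A. f k s y) t x = (\<Sum>k\<in>A. pd i (f k) t x)"
proof -
  have "((\<lambda>z. (\<lambda>s y. \<Sum>k\<in>A. f k s y) (fst z) (snd z)) has_derivative (\<lambda>h. \<Sum>k\<in>A. fd (f k) t x h)) (at (t, x))"
    using assms(2) by (auto intro!: has_derivative_sum dat_has)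
  from pd_has[OF this] have "pd i (\<lambda>s y. \<Sum>k\<in>A. f k s y) t x = (\<Sum>k\<in>A. fd (f k) t x (0, axis i 1))" by simp
  also have "\<dots> = (\<Sum>k\<in>A. pd i (f k) t x)" by (rule sum.cong[OF refl]) (simp add: pd_fd[OF assms(2)])
  finally show ?thesis .
qed

lemma dt_sum:
  assumes "finite A" "\<And>k. k \<in> A \<Longrightarrow> dat (f k) t x"
  shows "dt (\<lambda>s y. \<Sum>k\<in>A. f k s y) t x = (\<Sum>k\<in>A. dt (f k) t x)"
proof -
  have "((\<lambda>z. (\<lambda>s y. \<Sum>k\<in>A. f k s y) (fst z) (snd z)) has_derivative (\<lambda>h. \<Sum>k\<in>A. fd (f k) t x h)) (at (t, x))"
    using assms(2) by (auto intro!: has_derivative_sum dat_has)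
  from dt_has[OF this] have "dt (\<lambda>s y. \<Sum>k\<in>A. f k s y) t x = (\<Sum>k\<in>A. fd (f k) t x (1, 0))" by simp
  also have "\<dots> = (\<Sum>k\<in>A. dt (f k) t x)" by (rule sum.cong[OF refl]) (simp add: dt_fd[OF assms(2)])
  finally show ?thesis .
qed

lemma dat_sum:
  assumes "finite A" "\<And>k. k \<in> A \<Longrightarrow> dat (f k) t x"
  shows "dat (\<lambda>s y. \<Sum>k\<in>A. f k s y) t x"
proof -
  have "((\<lambda>z. (\<lambda>s y. \<Sum>k\<in>A. f k s y) (fst z) (snd z)) has_derivative (\<lambda>h. \<Sum>k\<in>A. fd (f k) t x h)) (at (t, x))"
    using assms(2) by (auto intro!: has_derivative_sum dat_has)
  thus ?thesis unfolding dat_def differentiable_def by blast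
qed

lemma dat_const: "dat (\<lambda>s y. c) t x"
  unfolding dat_def by simp

lemma pd_const: "pd i (\<lambda>s y. c) t x = 0"
  unfolding pd_def by simp

lemma vec_as_sum: "(\<chi> k. a k) = (\<Sum>k\<in>UNIV. a k *\<^sub>R (axis k 1 :: real^'n::finite))"
  by (simp add: vec_eq_iff axis_def if_distrib cong: if_cong)

lemma dat_vec:
  fixes f :: "'n::finite \<Rightarrow> ('m::finite, real) field"
  assumes "\<And>k. dat (f k) t x"
  shows "dat (\<lambda>s y. \<chi> k. f k s y) t x"
proof -
  have "dat (\<lambda>s y. \<Sum>k\<in>UNIV. f k s y *\<^sub>R (axis k 1 :: real^'n)) t x"
    by (rule dat_sum) (auto intro!: dat_scaleR dat_const assms)
  thus ?thesis by (simp add: vec_as_sum[symmetric])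
qed

definition emb :: "'m::finite \<Rightarrow> 'b::real_normed_vector \<Rightarrow> 'b^'m" where
  "emb k v = (\<chi> j. if j = k then v else 0)"

lemma emb_nth: "emb k v $ j = (if j = k then v else 0)"
  by (simp add: emb_def)

lemma bl_emb: "bounded_linear (emb k :: 'b::real_normed_vector \<Rightarrow> 'b^'m::finite)"
proof (rule bounded_linear_intro[where K=1])
  fix a b :: 'b and r :: real
  show "emb k (a + b) = (emb k a + emb k b :: 'b^'m)" by (simp add: vec_eq_iff emb_nth)
  show "emb k (r *\<^sub>R a) = (r *\<^sub>R emb k a :: 'b^'m)" by (simp add: vec_eq_iff emb_nth)
  have "norm (emb k a :: 'b^'m) \<le> (\<Sum>j\<in>UNIV. norm ((emb k a :: 'b^'m) $ j))"
    unfolding norm_vec_def by (rule L2_set_le_sum) auto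
  also have "\<dots> = norm a" by (simp add: emb_nth if_distrib cong: if_cong)
  finally show "norm (emb k a :: 'b^'m) \<le> norm a * 1" by simp
qed

lemma vec_as_emb: "(\<chi> k. a k) = (\<Sum>k\<in>UNIV. emb k (a k) :: 'b::real_normed_vector^'m::finite)"
  by (simp add: vec_eq_iff emb_nth sum_component if_distrib cong: if_cong)

lemma dat_vecg:
  fixes f :: "'m::finite \<Rightarrow> ('n::finite, 'b::real_normed_vector) field"
  assumes "\<And>k. dat (f k) t x"
  shows "dat (\<lambda>s y. \<chi> k. f k s y) t x"
proof -
  have "\<And>k. dat (\<lambda>s y. emb k (f k s y) :: 'b^'m) t x"
  proof -
    fix k
    have "((\<lambda>z. emb k (f k (fst z) (snd z)) :: 'b^'m) has_derivative (\<lambda>h. emb k (fd (f k) t x h))) (at (t, x))"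
      by (rule bounded_linear.has_derivative[OF bl_emb dat_has[OF assms]])
    thus "dat (\<lambda>s y. emb k (f k s y) :: 'b^'m) t x" unfolding dat_def differentiable_def by auto
  qed
  hence "dat (\<lambda>s y. \<Sum>k\<in>UNIV. emb k (f k s y) :: 'b^'m) t x"
    by (intro dat_sum) auto
  thus ?thesis by (simp add: vec_as_emb[symmetric])
qed


definition h1f :: "real \<Rightarrow> real \<Rightarrow> real \<Rightarrow> real" where "h1f \<gamma> \<epsilon> r = 1 + \<epsilon> * (7/8 * r powr (7/8 - 1)) + \<epsilon> * (\<gamma> * r powr (\<gamma> - 1))"
definition h2f :: "real \<Rightarrow> real \<Rightarrow> real \<Rightarrow> real" where "h2f \<gamma> \<epsilon> r = \<epsilon> * (7/8 * ((7/8 - 1) * r powr (7/8 - 1 - 1))) + \<epsilon> * (\<gamma> * ((\<gamma> - 1) * r powr (\<gamma> - 1 - 1)))"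
definition h3f :: "real \<Rightarrow> real \<Rightarrow> real \<Rightarrow> real" where "h3f \<gamma> \<epsilon> r = \<epsilon> * (7/8 * ((7/8 - 1) * ((7/8 - 1 - 1) * r powr (7/8 - 1 - 1 - 1))))
   + \<epsilon> * (\<gamma> * ((\<gamma> - 1) * ((\<gamma> - 1 - 1) * r powr (\<gamma> - 1 - 1 - 1))))"

lemma powr_deriv: "0 < r \<Longrightarrow> ((\<lambda>r. r powr a) has_real_derivative a * r powr (a - 1)) (at r)"
  by (rule has_real_derivative_powr)

lemma h_deriv: "0 < r \<Longrightarrow> (h_eps \<gamma> \<epsilon> has_real_derivative h1f \<gamma> \<epsilon> r) (at r)"
  unfolding h_eps_def[abs_def] h1f_def
  by (intro DERIV_add DERIV_cmult DERIV_ident DERIV_const powr_deriv; assumption)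

lemma hp_eq: "0 < r \<Longrightarrow> hp_eps \<gamma> \<epsilon> r = h1f \<gamma> \<epsilon> r"
  unfolding hp_eps_def using h_deriv DERIV_imp_deriv by blast

lemma h1f_deriv: "0 < r \<Longrightarrow> (h1f \<gamma> \<epsilon> has_real_derivative h2f \<gamma> \<epsilon> r) (at r)"
proof -
  assume r: "0 < r"
  have "((\<lambda>r. 1 + \<epsilon> * (7/8 * r powr (7/8 - 1)) + \<epsilon> * (\<gamma> * r powr (\<gamma> - 1))) has_real_derivative
     0 + \<epsilon> * (7/8 * ((7/8 - 1) * r powr (7/8 - 1 - 1))) + \<epsilon> * (\<gamma> * ((\<gamma> - 1) * r powr (\<gamma> - 1 - 1)))) (at r)"
    by (intro DERIV_add DERIV_cmult DERIV_const powr_deriv r)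
  thus ?thesis unfolding h1f_def[abs_def] h2f_def by simp
qed

lemma h2f_deriv: "0 < r \<Longrightarrow> (h2f \<gamma> \<epsilon> has_real_derivative h3f \<gamma> \<epsilon> r) (at r)"
  unfolding h2f_def[abs_def] h3f_def
  by (intro DERIV_add DERIV_cmult DERIV_const powr_deriv)

lemma pos_transfer:
  assumes "(f has_real_derivative D) (at r)" "0 < r" "\<And>s. 0 < s \<Longrightarrow> g s = f s"
  shows "(g has_real_derivative D) (at r)"
  using has_field_derivative_transform_within_open[OF assms(1), of "{0<..}" g] assms by auto

lemma hp_deriv: "0 < r \<Longrightarrow> (hp_eps \<gamma> \<epsilon> has_real_derivative h2f \<gamma> \<epsilon> r) (at r)"
  by (rule pos_transfer[OF h1f_deriv]) (auto simp: hp_eq)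

definition k1f :: "real \<Rightarrow> real \<Rightarrow> real \<Rightarrow> real" where "k1f \<gamma> \<epsilon> r = h1f \<gamma> \<epsilon> r / r"
definition k2f :: "real \<Rightarrow> real \<Rightarrow> real \<Rightarrow> real" where "k2f \<gamma> \<epsilon> r = h2f \<gamma> \<epsilon> r / r - h1f \<gamma> \<epsilon> r / r^2"

lemma k1f_deriv: "0 < r \<Longrightarrow> (k1f \<gamma> \<epsilon> has_real_derivative k2f \<gamma> \<epsilon> r) (at r)"
  unfolding k1f_def[abs_def] k2f_def
  by (auto intro!: derivative_eq_intros h1f_deriv simp: field_simps power2_eq_square)

lemma k2f_diff: "0 < r \<Longrightarrow> k2f \<gamma> \<epsilon> differentiable (at r)"
proof -
  assume r: "0 < r"
  have "\<exists>D. ((\<lambda>r. h2f \<gamma> \<epsilon> r / r - h1f \<gamma> \<epsilon> r / r^2) has_real_derivative D) (at r)"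
    using r by (intro exI) (rule derivative_eq_intros refl h1f_deriv h2f_deriv | simp)+
  thus ?thesis unfolding k2f_def[abs_def] using real_differentiable_def by blast
qed

definition sq1 :: "real \<Rightarrow> real" where "sq1 r = inverse (sqrt r) / 2"
definition sq2 :: "real \<Rightarrow> real" where "sq2 r = - inverse (sqrt r) / (4 * r)"

lemma sqrt_deriv: "0 < r \<Longrightarrow> (sqrt has_real_derivative sq1 r) (at r)"
  unfolding sq1_def by (rule DERIV_real_sqrt)

lemma sq1_deriv: "0 < r \<Longrightarrow> (sq1 has_real_derivative sq2 r) (at r)"
proof -
  assume r: "0 < r"
  have "((\<lambda>r. inverse (sqrt r) / 2) has_real_derivative
      (- (inverse (sqrt r) * (inverse (sqrt r) / 2) * inverse (sqrt r))) / 2) (at r)"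
    using r by (auto intro!: derivative_eq_intros)
  moreover have "(- (inverse (sqrt r) * (inverse (sqrt r) / 2) * inverse (sqrt r))) / 2 = sq2 r"
    using r unfolding sq2_def by (simp add: field_simps power2_eq_square[symmetric])
  ultimately show ?thesis unfolding sq1_def[abs_def] by simp
qed

lemma sq2_diff: "0 < r \<Longrightarrow> sq2 differentiable (at r)"
proof -
  assume r: "0 < r"
  have "\<exists>D. ((\<lambda>r. - inverse (sqrt r) / (4 * r)) has_real_derivative D) (at r)"
    using r by (intro exI) (rule derivative_eq_intros refl | simp)+
  thus ?thesis unfolding sq2_def[abs_def] using real_differentiable_def by blast
qed

lemma dat_compD:
  fixes f :: "('n::finite, real) field" and F :: "real \<Rightarrow> real"
  assumes "dat f t x" "F differentiable (at (f t x))"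
  shows "dat (\<lambda>s y. F (f s y)) t x"
  using assms dat_comp[of f t x F] by (auto simp: real_differentiable_def)


locale sys =
  fixes \<rho> :: "real \<Rightarrow> real^'n::finite \<Rightarrow> real" and u :: "real \<Rightarrow> real^'n \<Rightarrow> real^'n"
    and \<phi> p :: "real \<Rightarrow> real" and \<nu> \<kappa> \<gamma> \<epsilon> T :: real
  assumes par: "0 < \<kappa>" "\<kappa> < \<nu>"
    and phi: "\<forall>r>0. \<exists>D. (\<phi> has_real_derivative D) (at r) \<and> r * D = hp_eps \<gamma> \<epsilon> r"
    and pder: "\<forall>r>0. (p has_real_derivative
                 mu \<nu> \<kappa> * ptil_eps \<epsilon> r * hp_eps \<gamma> \<epsilon> r / r) (at r)"
    and smr: "smooth_st {0<..<T} \<rho>" and smu: "smooth_st {0<..<T} u"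
    and pos: "\<forall>t x. 0 < \<rho> t x"
begin

abbreviation "I \<equiv> {0<..<T}"
abbreviation "H \<equiv> \<lambda>s y. h_eps \<gamma> \<epsilon> (\<rho> s y)"
abbreviation "H1 \<equiv> \<lambda>s y. hp_eps \<gamma> \<epsilon> (\<rho> s y)"
abbreviation "\<Phi> \<equiv> \<lambda>s y. \<phi> (\<rho> s y)"
abbreviation "S \<equiv> \<lambda>s y. sqrt (\<rho> s y)"
abbreviation "U k \<equiv> \<lambda>s y. u s y $ k"

lemma oI: "open I" by simp

lemma rpos: "0 < \<rho> s y" using pos by auto

lemma dR: "s \<in> I \<Longrightarrow> dat \<rho> s y" by (rule sm_dat[OF smr])
lemma dR1: "s \<in> I \<Longrightarrow> dat (pd i \<rho>) s y" by (rule sm_dat[OF sm_pd[OF smr]])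
lemma dR2: "s \<in> I \<Longrightarrow> dat (pd j (pd i \<rho>)) s y" by (rule sm_dat[OF sm_pd[OF sm_pd[OF smr]]])
lemma dR3: "s \<in> I \<Longrightarrow> dat (pd k (pd j (pd i \<rho>))) s y" by (rule sm_dat[OF sm_pd[OF sm_pd[OF sm_pd[OF smr]]]])
lemma dRt: "s \<in> I \<Longrightarrow> dat (dt \<rho>) s y" by (rule sm_dat[OF sm_dt[OF smr]])
lemma du: "s \<in> I \<Longrightarrow> dat u s y" by (rule sm_dat[OF smu])
lemma dut: "s \<in> I \<Longrightarrow> dat (dt u) s y" by (rule sm_dat[OF sm_dt[OF smu]])
lemma dU: "s \<in> I \<Longrightarrow> dat (U k) s y" by (rule dat_nth[OF du])

lemma pdU: "s \<in> I \<Longrightarrow> pd i (U k) s y = pd i u s y $ k"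
  by (rule pd_nth[OF du])

lemma dU1: "s \<in> I \<Longrightarrow> dat (pd i (U k)) s y"
  by (rule dat_cong[OF oI, where g="\<lambda>s y. pd i u s y $ k"]) (auto simp: pdU intro!: dat_nth sm_dat[OF sm_pd[OF smu]])

lemma pdU2: "s \<in> I \<Longrightarrow> pd j (pd i (U k)) s y = pd j (pd i u) s y $ k"
proof -
  assume s: "s \<in> I"
  have "pd j (pd i (U k)) s y = pd j (\<lambda>s y. pd i u s y $ k) s y"
    by (rule pd_slice) (rule pdU[OF s])
  also have "\<dots> = pd j (pd i u) s y $ k"
    by (rule pd_nth[OF sm_dat[OF sm_pd[OF smu] s]])
  finally show ?thesis .
qed

lemma dU2: "s \<in> I \<Longrightarrow> dat (pd j (pd i (U k))) s y"
  by (rule dat_cong[OF oI, where g="\<lambda>s y. pd j (pd i u) s y $ k"]) (auto simp: pdU2 intro!: dat_nth sm_dat[OF sm_pd[OF sm_pd[OF smu]]])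

lemma h_der: "0 < r \<Longrightarrow> (h_eps \<gamma> \<epsilon> has_real_derivative hp_eps \<gamma> \<epsilon> r) (at r)"
  using h_deriv hp_eq by metis

lemma phi_der: "0 < r \<Longrightarrow> (\<phi> has_real_derivative k1f \<gamma> \<epsilon> r) (at r)"
proof -
  assume r: "0 < r"
  obtain D where D: "(\<phi> has_real_derivative D) (at r)" "r * D = hp_eps \<gamma> \<epsilon> r" using phi r by blast
  have "D = k1f \<gamma> \<epsilon> r" using D(2) r hp_eq[OF r] by (simp add: k1f_def field_simps)
  thus ?thesis using D by simp
qed

lemma p_der: "0 < r \<Longrightarrow> (p has_real_derivative mu \<nu> \<kappa> * ptil_eps \<epsilon> r * hp_eps \<gamma> \<epsilon> r / r) (at r)"
  using pder by blast

lemma difh: "0 < r \<Longrightarrow> h_eps \<gamma> \<epsilon> differentiable (at r)"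
  using h_der real_differentiable_def by blast
lemma difhp: "0 < r \<Longrightarrow> hp_eps \<gamma> \<epsilon> differentiable (at r)"
  using hp_deriv real_differentiable_def by blast
lemma difh2: "0 < r \<Longrightarrow> h2f \<gamma> \<epsilon> differentiable (at r)"
  using h2f_deriv real_differentiable_def by blast
lemma difphi: "0 < r \<Longrightarrow> \<phi> differentiable (at r)"
  using phi_der real_differentiable_def by blast
lemma difk1: "0 < r \<Longrightarrow> k1f \<gamma> \<epsilon> differentiable (at r)"
  using k1f_deriv real_differentiable_def by blast
lemma difk2: "0 < r \<Longrightarrow> k2f \<gamma> \<epsilon> differentiable (at r)"
  by (rule k2f_diff)
lemma difp: "0 < r \<Longrightarrow> p differentiable (at r)"
  using p_der real_differentiable_def by blast
lemma difsqrt: "0 < r \<Longrightarrow> sqrt differentiable (at r)"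
  using sqrt_deriv real_differentiable_def by blast
lemma difsq1: "0 < r \<Longrightarrow> sq1 differentiable (at r)"
  using sq1_deriv real_differentiable_def by blast
lemma difpowr: "0 < r \<Longrightarrow> (\<lambda>r. r powr \<gamma>) differentiable (at r)"
  using powr_deriv real_differentiable_def by blast

lemmas difs = difh difhp difh2 difphi difk1 difk2 difp difsqrt difsq1 difpowr

lemma dcomp: fixes F :: "real \<Rightarrow> real" shows "s \<in> I \<Longrightarrow> (\<And>r. 0 < r \<Longrightarrow> F differentiable (at r)) \<Longrightarrow> dat (\<lambda>s y. F (\<rho> s y)) s y"
  using dat_compD[of \<rho> s y F] dR rpos by blast

lemma pdH: "s \<in> I \<Longrightarrow> pd i H s y = hp_eps \<gamma> \<epsilon> (\<rho> s y) * pd i \<rho> s y"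
  by (rule pd_comp[OF dR h_der[OF rpos]])
lemma pdH1: "s \<in> I \<Longrightarrow> pd i H1 s y = h2f \<gamma> \<epsilon> (\<rho> s y) * pd i \<rho> s y"
  by (rule pd_comp[OF dR hp_deriv[OF rpos]])
lemma pdPhi: "s \<in> I \<Longrightarrow> pd i \<Phi> s y = k1f \<gamma> \<epsilon> (\<rho> s y) * pd i \<rho> s y"
  by (rule pd_comp[OF dR phi_der[OF rpos]])
lemma pdS: "s \<in> I \<Longrightarrow> pd i S s y = sq1 (\<rho> s y) * pd i \<rho> s y"
  by (rule pd_comp[OF dR sqrt_deriv[OF rpos]])
lemma pdK1: "s \<in> I \<Longrightarrow> pd i (\<lambda>s y. k1f \<gamma> \<epsilon> (\<rho> s y)) s y = k2f \<gamma> \<epsilon> (\<rho> s y) * pd i \<rho> s y"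
  by (rule pd_comp[OF dR k1f_deriv[OF rpos]])
lemma pdSq1: "s \<in> I \<Longrightarrow> pd i (\<lambda>s y. sq1 (\<rho> s y)) s y = sq2 (\<rho> s y) * pd i \<rho> s y"
  by (rule pd_comp[OF dR sq1_deriv[OF rpos]])
lemma pdP: "s \<in> I \<Longrightarrow> pd i (\<lambda>s y. p (\<rho> s y)) s y = mu \<nu> \<kappa> * ptil_eps \<epsilon> (\<rho> s y) * hp_eps \<gamma> \<epsilon> (\<rho> s y) / \<rho> s y * pd i \<rho> s y"
  by (rule pd_comp[OF dR p_der[OF rpos]])
lemma dtH: "s \<in> I \<Longrightarrow> dt H s y = hp_eps \<gamma> \<epsilon> (\<rho> s y) * dt \<rho> s y"
  by (rule dt_comp[OF dR h_der[OF rpos]])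

lemma dpdH: "s \<in> I \<Longrightarrow> dat (pd i H) s y"
  by (rule dat_cong[OF oI, where g="\<lambda>s y. hp_eps \<gamma> \<epsilon> (\<rho> s y) * pd i \<rho> s y"])
     (auto simp: pdH intro!: dat_mult dcomp difs dR1)
lemma dpdH1: "s \<in> I \<Longrightarrow> dat (pd i H1) s y"
  by (rule dat_cong[OF oI, where g="\<lambda>s y. h2f \<gamma> \<epsilon> (\<rho> s y) * pd i \<rho> s y"])
     (auto simp: pdH1 intro!: dat_mult dcomp difs dR1)
lemma dpdPhi: "s \<in> I \<Longrightarrow> dat (pd i \<Phi>) s y"
  by (rule dat_cong[OF oI, where g="\<lambda>s y. k1f \<gamma> \<epsilon> (\<rho> s y) * pd i \<rho> s y"])
     (auto simp: pdPhi intro!: dat_mult dcomp difs dR1)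
lemma dpdS: "s \<in> I \<Longrightarrow> dat (pd i S) s y"
  by (rule dat_cong[OF oI, where g="\<lambda>s y. sq1 (\<rho> s y) * pd i \<rho> s y"])
     (auto simp: pdS intro!: dat_mult dcomp difs dR1)

lemma pdpdPhi: "s \<in> I \<Longrightarrow> pd j (pd i \<Phi>) s y =
   k1f \<gamma> \<epsilon> (\<rho> s y) * pd j (pd i \<rho>) s y + k2f \<gamma> \<epsilon> (\<rho> s y) * pd j \<rho> s y * pd i \<rho> s y"
proof -
  assume s: "s \<in> I"
  have "pd j (pd i \<Phi>) s y = pd j (\<lambda>s y. k1f \<gamma> \<epsilon> (\<rho> s y) * pd i \<rho> s y) s y"
    by (rule pd_slice) (rule pdPhi[OF s])
  also have "\<dots> = k1f \<gamma> \<epsilon> (\<rho> s y) * pd j (pd i \<rho>) s y + pd j (\<lambda>s y. k1f \<gamma> \<epsilon> (\<rho> s y)) s y * pd i \<rho> s y"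
    by (rule pd_mult) (auto intro!: dcomp difs dR1 s)
  finally show ?thesis using pdK1[OF s] by simp
qed

lemma pdpdS: "s \<in> I \<Longrightarrow> pd j (pd i S) s y =
   sq1 (\<rho> s y) * pd j (pd i \<rho>) s y + sq2 (\<rho> s y) * pd j \<rho> s y * pd i \<rho> s y"
proof -
  assume s: "s \<in> I"
  have "pd j (pd i S) s y = pd j (\<lambda>s y. sq1 (\<rho> s y) * pd i \<rho> s y) s y"
    by (rule pd_slice) (rule pdS[OF s])
  also have "\<dots> = sq1 (\<rho> s y) * pd j (pd i \<rho>) s y + pd j (\<lambda>s y. sq1 (\<rho> s y)) s y * pd i \<rho> s y"
    by (rule pd_mult) (auto intro!: dcomp difs dR1 s)
  finally show ?thesis using pdSq1[OF s] by simp
qed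

lemma dpdpdPhi: "s \<in> I \<Longrightarrow> dat (pd j (pd i \<Phi>)) s y"
  by (rule dat_cong[OF oI, where g="\<lambda>s y. k1f \<gamma> \<epsilon> (\<rho> s y) * pd j (pd i \<rho>) s y + k2f \<gamma> \<epsilon> (\<rho> s y) * pd j \<rho> s y * pd i \<rho> s y"])
     (auto simp: pdpdPhi intro!: dat_mult dat_add dcomp difs dR1 dR2)

lemma comm2Phi: "s \<in> I \<Longrightarrow> pd j (pd i \<Phi>) s y = pd i (pd j \<Phi>) s y"
  by (rule pd_comm[OF oI]) (auto intro!: dcomp difs dpdPhi)

lemma comm3Phi: "s \<in> I \<Longrightarrow> pd j (pd i (pd k \<Phi>)) s y = pd i (pd j (pd k \<Phi>)) s y"
  by (rule pd_comm[OF oI]) (auto intro!: dpdPhi dpdpdPhi)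

end


context sys begin

lemma E1: "s \<in> I \<Longrightarrow> \<rho> s y * pd i \<Phi> s y = pd i H s y"
proof -
  assume s: "s \<in> I"
  have r: "0 < \<rho> s y" by (rule rpos)
  show ?thesis unfolding pdPhi[OF s] pdH[OF s] hp_eq[OF r] k1f_def using r by simp
qed

lemma dW: "s \<in> I \<Longrightarrow> dat (grad \<Phi>) s y"
  unfolding grad_def by (auto intro!: dat_vec dpdPhi)

lemma dv: "s \<in> I \<Longrightarrow> dat (\<lambda>s y. u s y + c *\<^sub>R grad \<Phi> s y) s y"
  by (auto intro!: dat_add dat_cscale du dW)

lemma drv: "s \<in> I \<Longrightarrow> dat (\<lambda>s y. \<rho> s y *\<^sub>R (u s y + c *\<^sub>R grad \<Phi> s y)) s y"
  by (auto intro!: dat_scaleR dv dR)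

lemma dru: "s \<in> I \<Longrightarrow> dat (\<lambda>s y. \<rho> s y *\<^sub>R u s y) s y"
  by (auto intro!: dat_scaleR du dR)

lemma vcomp: "(u s y + c *\<^sub>R grad \<Phi> s y) $ k = U k s y + c * pd k \<Phi> s y"
  by (simp add: grad_def)

lemma rvcomp: "s \<in> I \<Longrightarrow> (\<rho> s y *\<^sub>R (u s y + c *\<^sub>R grad \<Phi> s y)) $ k = \<rho> s y * U k s y + c * pd k H s y"
  using E1[of s y k] by (simp add: grad_def algebra_simps)

lemma mass_v:
  assumes mass: "\<forall>t\<in>I. \<forall>x. dt \<rho> t x + divg (\<lambda>s y. \<rho> s y *\<^sub>R u s y) t x = 0"
    and t: "t \<in> I"
  shows "dt \<rho> t x + divg (\<lambda>s y. \<rho> s y *\<^sub>R (u s y + c *\<^sub>R grad \<Phi> s y)) t x = c * lap H t x"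
proof -
  have "\<And>i. pd i (\<lambda>s y. \<rho> s y *\<^sub>R (u s y + c *\<^sub>R grad \<Phi> s y)) t x $ i
        = pd i (\<lambda>s y. \<rho> s y *\<^sub>R u s y) t x $ i + c * pd i (pd i H) t x"
  proof -
    fix i
    have "pd i (\<lambda>s y. \<rho> s y *\<^sub>R (u s y + c *\<^sub>R grad \<Phi> s y)) t x $ i
        = pd i (\<lambda>s y. (\<rho> s y *\<^sub>R (u s y + c *\<^sub>R grad \<Phi> s y)) $ i) t x"
      by (rule pd_nth[OF drv[OF t], symmetric])
    also have "\<dots> = pd i (\<lambda>s y. \<rho> s y * U i s y + c * pd i H s y) t x"
      by (rule pd_slice) (rule rvcomp[OF t])
    also have "\<dots> = pd i (\<lambda>s y. \<rho> s y * U i s y) t x + pd i (\<lambda>s y. c * pd i H s y) t x"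
      by (rule pd_add) (auto intro!: dat_mult dat_cmult dR dU dpdH t)
    also have "pd i (\<lambda>s y. c * pd i H s y) t x = c * pd i (pd i H) t x"
      by (rule pd_cmult) (rule dpdH[OF t])
    also have "pd i (\<lambda>s y. \<rho> s y * U i s y) t x = pd i (\<lambda>s y. \<rho> s y *\<^sub>R u s y) t x $ i"
    proof -
      have "pd i (\<lambda>s y. \<rho> s y * U i s y) t x = pd i (\<lambda>s y. (\<rho> s y *\<^sub>R u s y) $ i) t x"
        by simp
      also have "\<dots> = pd i (\<lambda>s y. \<rho> s y *\<^sub>R u s y) t x $ i"
        by (rule pd_nth[OF dru[OF t]])
      finally show ?thesis .
    qed
    finally show "pd i (\<lambda>s y. \<rho> s y *\<^sub>R (u s y + c *\<^sub>R grad \<Phi> s y)) t x $ i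
        = pd i (\<lambda>s y. \<rho> s y *\<^sub>R u s y) t x $ i + c * pd i (pd i H) t x" .
  qed
  hence "divg (\<lambda>s y. \<rho> s y *\<^sub>R (u s y + c *\<^sub>R grad \<Phi> s y)) t x
        = divg (\<lambda>s y. \<rho> s y *\<^sub>R u s y) t x + c * lap H t x"
    unfolding divg_def lap_def by (simp add: sum.distrib sum_distrib_left)
  thus ?thesis using mass t by simp
qed

end


lemma vec_comp_eq: "(\<lambda>s y. F s y) = (\<lambda>s y. \<chi> k. F s y $ k)"
  by (simp add: vec_eq_iff)

lemma dat_comps:
  fixes F :: "('n::finite, ('b::real_normed_vector)^'m::finite) field"
  assumes "\<And>k. dat (\<lambda>s y. F s y $ k) t x"
  shows "dat F t x"
proof -
  have "dat (\<lambda>s y. \<chi> k. F s y $ k) t x" by (rule dat_vecg) (rule assms)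
  thus ?thesis by simp
qed

lemma dat_comps2:
  fixes M :: "('n::finite, real^'m::finite^'l::finite) field"
  assumes "\<And>i k. dat (\<lambda>s y. M s y $ i $ k) t x"
  shows "dat M t x"
  by (rule dat_comps, rule dat_comps) (rule assms)

lemma pd_nth2:
  fixes M :: "('n::finite, real^'m::finite^'l::finite) field"
  assumes "dat M t x"
  shows "pd j M t x $ i $ k = pd j (\<lambda>s y. M s y $ i $ k) t x"
proof -
  have "pd j M t x $ i = pd j (\<lambda>s y. M s y $ i) t x" by (rule pd_nth[OF assms, symmetric])
  moreover have "pd j (\<lambda>s y. M s y $ i) t x $ k = pd j (\<lambda>s y. M s y $ i $ k) t x"
    by (rule pd_nth[OF dat_nth[OF assms], symmetric])
  ultimately show ?thesis by simp
qed

lemma divM_comp: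
  fixes M :: "('n::finite, real^'n^'n) field"
  assumes "dat M t x"
  shows "divM M t x $ i = (\<Sum>j\<in>UNIV. pd j (\<lambda>s y. M s y $ i $ j) t x)"
  unfolding divM_def using pd_nth2[OF assms] by simp

lemma lap_comp:
  fixes F :: "('n::finite, real^'m::finite) field"
  assumes oI: "open I" and t: "t \<in> I" and dF: "\<And>s y. s \<in> I \<Longrightarrow> dat F s y"
    and d1: "\<And>j k. dat (pd j (\<lambda>s y. F s y $ k)) t x"
  shows "lap F t x $ i = (\<Sum>j\<in>UNIV. pd j (pd j (\<lambda>s y. F s y $ i)) t x)"
proof -
  have e: "\<And>s y. s \<in> I \<Longrightarrow> pd j F s y = (\<chi> k. pd j (\<lambda>s y. F s y $ k) s y)" for j
    using pd_nth[OF dF] by (simp add: vec_eq_iff)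
  have dpj: "dat (pd j F) t x" for j
    by (rule dat_cong[OF oI t, where g="\<lambda>s y. \<chi> k. pd j (\<lambda>s y. F s y $ k) s y"])
       (auto simp: e intro!: dat_vec d1)
  have "\<And>j. pd j (pd j F) t x $ i = pd j (pd j (\<lambda>s y. F s y $ i)) t x"
  proof -
    fix j
    have "pd j (pd j F) t x $ i = pd j (\<lambda>s y. pd j F s y $ i) t x"
      by (rule pd_nth[OF dpj, symmetric])
    also have "\<dots> = pd j (pd j (\<lambda>s y. F s y $ i)) t x"
      by (rule pd_slice) (rule pd_nth[OF dF[OF t], symmetric])
    finally show "pd j (pd j F) t x $ i = pd j (pd j (\<lambda>s y. F s y $ i)) t x" .
  qed
  thus ?thesis unfolding lap_def by simp
qed

context sys begin

lemma pdv: "s \<in> I \<Longrightarrow> pd k (\<lambda>s y. u s y + c *\<^sub>R grad \<Phi> s y) s y $ i = pd k (U i) s y + c * pd k (pd i \<Phi>) s y"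
proof -
  assume s: "s \<in> I"
  have "pd k (\<lambda>s y. u s y + c *\<^sub>R grad \<Phi> s y) s y $ i = pd k (\<lambda>s y. (u s y + c *\<^sub>R grad \<Phi> s y) $ i) s y"
    by (rule pd_nth[OF dv[OF s], symmetric])
  also have "\<dots> = pd k (\<lambda>s y. U i s y + c * pd i \<Phi> s y) s y"
    by (rule pd_slice) (rule vcomp)
  also have "\<dots> = pd k (U i) s y + pd k (\<lambda>s y. c * pd i \<Phi> s y) s y"
    by (rule pd_add) (auto intro!: dat_cmult dU dpdPhi s)
  also have "pd k (\<lambda>s y. c * pd i \<Phi> s y) s y = c * pd k (pd i \<Phi>) s y"
    by (rule pd_cmult) (rule dpdPhi[OF s])
  finally show ?thesis .
qed

lemma dpdv: "s \<in> I \<Longrightarrow> dat (\<lambda>s y. pd k (\<lambda>s y. u s y + c *\<^sub>R grad \<Phi> s y) s y $ i) s y"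
  by (rule dat_cong[OF oI, where g="\<lambda>s y. pd k (U i) s y + c * pd k (pd i \<Phi>) s y"])
     (auto simp: pdv intro!: dat_add dat_cmult dU1 dpdpdPhi)

lemma D0: "\<forall>t\<in>I. \<forall>x. dt \<rho> t x + divg (\<lambda>s y. \<rho> s y *\<^sub>R u s y) t x = 0 \<Longrightarrow>
   s \<in> I \<Longrightarrow> dat (divg (\<lambda>s y. \<rho> s y *\<^sub>R u s y)) s y"
proof -
  assume m: "\<forall>t\<in>I. \<forall>x. dt \<rho> t x + divg (\<lambda>s y. \<rho> s y *\<^sub>R u s y) t x = 0" and s: "s \<in> I"
  have d: "dat (\<lambda>s y. (-1) * dt \<rho> s y) s y" by (rule dat_cmult[OF dRt[OF s]])
  show ?thesis
    by (rule dat_cong[OF oI s _ d]) (use m in \<open>auto simp: add_eq_0_iff\<close>)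
qed

end


context sys begin

abbreviation "G \<equiv> \<lambda>s y. g_eps \<gamma> \<epsilon> (\<rho> s y)"

lemma g_der: "0 < r \<Longrightarrow> (g_eps \<gamma> \<epsilon> has_real_derivative r * h2f \<gamma> \<epsilon> r) (at r)"
proof -
  assume r: "0 < r"
  have "((\<lambda>r. r * hp_eps \<gamma> \<epsilon> r - h_eps \<gamma> \<epsilon> r) has_real_derivative
      (r * h2f \<gamma> \<epsilon> r + 1 * hp_eps \<gamma> \<epsilon> r) - hp_eps \<gamma> \<epsilon> r) (at r)"
    by (intro DERIV_diff DERIV_mult' DERIV_ident hp_deriv h_der r)
  thus ?thesis unfolding g_eps_def[abs_def] by simp
qed

lemma difg: "0 < r \<Longrightarrow> g_eps \<gamma> \<epsilon> differentiable (at r)"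
  using g_der real_differentiable_def by blast

lemma pdG: "s \<in> I \<Longrightarrow> pd i G s y = \<rho> s y * pd i H1 s y"
proof -
  assume s: "s \<in> I"
  have "pd i G s y = \<rho> s y * h2f \<gamma> \<epsilon> (\<rho> s y) * pd i \<rho> s y"
    by (rule pd_comp[OF dR[OF s] g_der[OF rpos]])
  thus ?thesis using pdH1[OF s, of i y] by simp
qed

lemma dHU: "s \<in> I \<Longrightarrow> dat (\<lambda>s y. H s y * U k s y) s y"
  by (auto intro!: dat_mult dcomp difs dU)

lemma pdHU: "s \<in> I \<Longrightarrow> pd j (\<lambda>s y. H s y * U k s y) s y = H s y * pd j (U k) s y + pd j H s y * U k s y"
  by (rule pd_mult) (auto intro!: dcomp difs dU)

lemma dpdHU: "s \<in> I \<Longrightarrow> dat (pd j (\<lambda>s y. H s y * U k s y)) s y"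
  by (rule dat_cong[OF oI, where g="\<lambda>s y. H s y * pd j (U k) s y + pd j H s y * U k s y"])
     (auto simp: pdHU intro!: dat_add dat_mult dcomp difs dU dU1 dpdH)

lemma pdHW: "s \<in> I \<Longrightarrow> pd j (\<lambda>s y. H s y * pd k \<Phi> s y) s y = H s y * pd j (pd k \<Phi>) s y + pd j H s y * pd k \<Phi> s y"
  by (rule pd_mult) (auto intro!: dcomp difs dpdPhi)

lemma dpdHW: "s \<in> I \<Longrightarrow> dat (pd j (\<lambda>s y. H s y * pd k \<Phi> s y)) s y"
  by (rule dat_cong[OF oI, where g="\<lambda>s y. H s y * pd j (pd k \<Phi>) s y + pd j H s y * pd k \<Phi> s y"])
     (auto simp: pdHW intro!: dat_add dat_mult dcomp difs dpdPhi dpdpdPhi dpdH)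

lemma dat_cdiv: "dat f t x \<Longrightarrow> dat (\<lambda>s y. f s y / (c::real)) t x"
  using dat_cmult[of f t x "inverse c"] by (simp add: divide_inverse mult.commute)

lemma Y2j:
  assumes t: "t \<in> I"
  shows "pd j (\<lambda>s y. pd i \<Phi> s y * pd j H s y) t x
       + pd j (\<lambda>s y. H s y * ((pd j (pd i \<Phi>) s y + pd i (pd j \<Phi>) s y) / 2)) t x
       - pd j (pd j (\<lambda>s y. H s y * pd i \<Phi> s y)) t x = 0"
proof -
  have "pd j (pd j (\<lambda>s y. H s y * pd i \<Phi> s y)) t x
     = pd j (\<lambda>s y. pd i \<Phi> s y * pd j H s y + H s y * ((pd j (pd i \<Phi>) s y + pd i (pd j \<Phi>) s y) / 2)) t x"
  proof (rule pd_slice)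
    fix y
    show "pd j (\<lambda>s y. H s y * pd i \<Phi> s y) t y = pd i \<Phi> t y * pd j H t y + H t y * ((pd j (pd i \<Phi>) t y + pd i (pd j \<Phi>) t y) / 2)"
      using pdHW[OF t, where j=j and k=i and y=y] comm2Phi[OF t, where j=j and i=i and y=y] by (simp add: algebra_simps)
  qed
  also have "\<dots> = pd j (\<lambda>s y. pd i \<Phi> s y * pd j H s y) t x
       + pd j (\<lambda>s y. H s y * ((pd j (pd i \<Phi>) s y + pd i (pd j \<Phi>) s y) / 2)) t x"
    by (rule pd_add[OF dat_mult[OF dpdPhi[OF t] dpdH[OF t]] dat_mult[OF dcomp[OF t difh] dat_cdiv[OF dat_add[OF dpdpdPhi[OF t] dpdpdPhi[OF t]]]]])
  finally show ?thesis by simp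
qed


lemma Xj:
  assumes t: "t \<in> I"
  shows "2 * pd j (\<lambda>s y. H s y * ((pd j (U i) s y + pd i (U j) s y) / 2)) t x
       + pd j (\<lambda>s y. U i s y * pd j H s y + pd i H s y * U j s y) t x
       - pd j (pd j (\<lambda>s y. H s y * U i s y)) t x
       = pd i (pd j (\<lambda>s y. H s y * U j s y)) t x"
proof -
  have dA: "dat (\<lambda>s y. H s y * ((pd j (U i) s y + pd i (U j) s y) / 2)) t x"
    by (rule dat_mult[OF dcomp[OF t difh] dat_cdiv[OF dat_add[OF dU1[OF t] dU1[OF t]]]])
  have dB: "dat (\<lambda>s y. U i s y * pd j H s y + pd i H s y * U j s y) t x"
    by (rule dat_add[OF dat_mult[OF dU[OF t] dpdH[OF t]] dat_mult[OF dpdH[OF t] dU[OF t]]])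
  have dC: "dat (\<lambda>s y. H s y * pd j (U i) s y + pd j H s y * U i s y) t x"
    by (rule dat_add[OF dat_mult[OF dcomp[OF t difh] dU1[OF t]] dat_mult[OF dpdH[OF t] dU[OF t]]])
  have "2 * pd j (\<lambda>s y. H s y * ((pd j (U i) s y + pd i (U j) s y) / 2)) t x
       + pd j (\<lambda>s y. U i s y * pd j H s y + pd i H s y * U j s y) t x
       = pd j (\<lambda>s y. 2 * (H s y * ((pd j (U i) s y + pd i (U j) s y) / 2))
                    + (U i s y * pd j H s y + pd i H s y * U j s y)) t x"
    using pd_add[OF dat_cmult[OF dA, of 2] dB, of j] pd_cmult[OF dA, of j 2] by simp
  also have "\<dots> = pd j (\<lambda>s y. (H s y * pd j (U i) s y + pd j H s y * U i s y)
                    + pd i (\<lambda>s y. H s y * U j s y) s y) t x"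
  proof (rule pd_slice)
    fix y
    show "2 * (H t y * ((pd j (U i) t y + pd i (U j) t y) / 2)) + (U i t y * pd j H t y + pd i H t y * U j t y)
        = (H t y * pd j (U i) t y + pd j H t y * U i t y) + pd i (\<lambda>s y. H s y * U j s y) t y"
      using pdHU[OF t, where j=i and k=j and y=y] by (simp add: algebra_simps)
  qed
  also have "\<dots> = pd j (\<lambda>s y. H s y * pd j (U i) s y + pd j H s y * U i s y) t x
                  + pd j (pd i (\<lambda>s y. H s y * U j s y)) t x"
    by (rule pd_add[OF dC dpdHU[OF t]])
  also have "pd j (\<lambda>s y. H s y * pd j (U i) s y + pd j H s y * U i s y) t x
           = pd j (pd j (\<lambda>s y. H s y * U i s y)) t x"
    by (rule pd_slice) (rule pdHU[OF t, symmetric])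
  also have "pd j (pd i (\<lambda>s y. H s y * U j s y)) t x = pd i (pd j (\<lambda>s y. H s y * U j s y)) t x"
    by (rule pd_comm[OF oI t dHU dpdHU[OF t] dpdHU[OF t]])
  finally show ?thesis by simp
qed

lemma pddivu: "s \<in> I \<Longrightarrow> divg u s y = (\<Sum>k\<in>UNIV. pd k (U k) s y)"
  unfolding divg_def by (simp add: pdU)

lemma ddivu: "s \<in> I \<Longrightarrow> dat (divg u) s y"
  by (rule dat_cong[OF oI, where g="\<lambda>s y. \<Sum>k\<in>UNIV. pd k (U k) s y"])
     (auto simp: pddivu intro!: dat_sum dU1)

lemma pddivru: "s \<in> I \<Longrightarrow> divg (\<lambda>s y. \<rho> s y *\<^sub>R u s y) s y
     = (\<Sum>k\<in>UNIV. \<rho> s y * pd k (U k) s y + pd k \<rho> s y * U k s y)"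
proof -
  assume s: "s \<in> I"
  have "\<And>k. pd k (\<lambda>s y. \<rho> s y *\<^sub>R u s y) s y $ k = \<rho> s y * pd k (U k) s y + pd k \<rho> s y * U k s y"
  proof -
    fix k
    have "pd k (\<lambda>s y. \<rho> s y *\<^sub>R u s y) s y $ k = pd k (\<lambda>s y. \<rho> s y * U k s y) s y"
      using pd_nth[OF dru[OF s], of k k] by simp
    also have "\<dots> = \<rho> s y * pd k (U k) s y + pd k \<rho> s y * U k s y"
      by (rule pd_mult[OF dR[OF s] dU[OF s]])
    finally show "pd k (\<lambda>s y. \<rho> s y *\<^sub>R u s y) s y $ k = \<rho> s y * pd k (U k) s y + pd k \<rho> s y * U k s y" .
  qed
  thus ?thesis unfolding divg_def by simp
qed

lemma X0:
  assumes mass: "\<forall>t\<in>I. \<forall>x. dt \<rho> t x + divg (\<lambda>s y. \<rho> s y *\<^sub>R u s y) t x = 0"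
    and t: "t \<in> I"
  shows "pd i (\<lambda>s y. G s y * divg u s y) t x - pd i (\<lambda>s y. H1 s y * divg (\<lambda>s y. \<rho> s y *\<^sub>R u s y) s y) t x
     + (\<Sum>j\<in>UNIV. pd i (pd j (\<lambda>s y. H s y * U j s y)) t x) = 0"
proof -
  have d1: "dat (\<lambda>s y. G s y * divg u s y) t x"
    by (rule dat_mult[OF dcomp[OF t difg] ddivu[OF t]])
  have d2: "dat (\<lambda>s y. H1 s y * divg (\<lambda>s y. \<rho> s y *\<^sub>R u s y) s y) t x"
    by (rule dat_mult[OF dcomp[OF t difhp] D0[OF mass t]])
  have d3: "dat (\<lambda>s y. \<Sum>j\<in>UNIV. pd j (\<lambda>s y. H s y * U j s y) s y) t x"
    by (rule dat_sum) (auto intro: dpdHU[OF t])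
  have "(\<Sum>j\<in>UNIV. pd i (pd j (\<lambda>s y. H s y * U j s y)) t x)
      = pd i (\<lambda>s y. \<Sum>j\<in>UNIV. pd j (\<lambda>s y. H s y * U j s y) s y) t x"
    by (rule pd_sum[symmetric]) (auto intro: dpdHU[OF t])
  hence "pd i (\<lambda>s y. G s y * divg u s y) t x - pd i (\<lambda>s y. H1 s y * divg (\<lambda>s y. \<rho> s y *\<^sub>R u s y) s y) t x
     + (\<Sum>j\<in>UNIV. pd i (pd j (\<lambda>s y. H s y * U j s y)) t x)
     = pd i (\<lambda>s y. (G s y * divg u s y - H1 s y * divg (\<lambda>s y. \<rho> s y *\<^sub>R u s y) s y)
           + (\<Sum>j\<in>UNIV. pd j (\<lambda>s y. H s y * U j s y) s y)) t x"
    using pd_add[OF dat_diff[OF d1 d2] d3, of i] pd_diff[OF d1 d2, of i] by simp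
  also have "\<dots> = pd i (\<lambda>s y. 0) t x"
  proof (rule pd_slice)
    fix y
    have r: "0 < \<rho> t y" by (rule rpos)
    have "G t y * divg u t y - H1 t y * divg (\<lambda>s y. \<rho> s y *\<^sub>R u s y) t y
           + (\<Sum>j\<in>UNIV. pd j (\<lambda>s y. H s y * U j s y) t y)
        = (\<Sum>k\<in>UNIV. G t y * pd k (U k) t y - H1 t y * (\<rho> t y * pd k (U k) t y + pd k \<rho> t y * U k t y)
              + (H t y * pd k (U k) t y + pd k H t y * U k t y))"
      unfolding pddivu[OF t] pddivru[OF t] pdHU[OF t]
      by (simp add: sum_distrib_left sum_subtractf sum.distrib distrib_left)
    also have "\<dots> = 0"
      by (rule sum.neutral) (simp add: pdH[OF t] g_eps_def algebra_simps)
    finally show "G t y * divg u t y - H1 t y * divg (\<lambda>s y. \<rho> s y *\<^sub>R u s y) t y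
           + (\<Sum>j\<in>UNIV. pd j (\<lambda>s y. H s y * U j s y) t y) = 0" .
  qed
  also have "\<dots> = 0" by (rule pd_const)
  finally show ?thesis .
qed

end


lemma qalg:
  fixes A B R Q a b :: real
  assumes Q: "0 < Q" "Q * Q = R"
  shows "A * (A * (1 / (2 * Q) * b + (- 1 / (4 * R * Q)) * a * a) + B * a * (1 / (2 * Q) * a)) / Q
      = (A * (A / R * b + (B / R - A / R^2) * a * a) + (1/2) * ((A / R * a) * (A / R * a))) / 2"
proof -
  have R: "0 < R" using Q by (metis mult_pos_pos)
  have "R \<noteq> 0" "Q \<noteq> 0" using Q R by auto
  show ?thesis unfolding Q(2)[symmetric] using Q(1) by (simp add: field_simps power2_eq_square)
qed

lemma qalg2:
  fixes H1 h2 r S k1 k2 s1 s2 a b :: real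
  assumes "0 < S" "S * S = r" "k1 = H1 / r" "k2 = h2 / r - H1 / r^2" "s1 = 1 / (2 * S)" "s2 = - 1 / (4 * r * S)"
  shows "H1 * (H1 * (s1 * b + s2 * a * a) + h2 * a * (s1 * a)) / S = (H1 * (k1 * b + k2 * a * a) + (1/2) * ((k1 * a) * (k1 * a))) / 2"
  unfolding assms(3-6) by (rule qalg[OF assms(1,2)])

context sys begin

abbreviation "dW0 \<equiv> \<lambda>s y. \<Sum>j\<in>UNIV. pd j (pd j \<Phi>) s y"
abbreviation "Q2 \<equiv> \<lambda>s y. H1 s y * dW0 s y + (1/2) * (\<Sum>j\<in>UNIV. pd j \<Phi> s y * pd j \<Phi> s y)"
abbreviation "wv \<equiv> \<lambda>s y. H1 s y *\<^sub>R grad S s y"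
abbreviation "qf \<equiv> \<lambda>s y. H1 s y * divg wv s y / S s y"

lemma dwv: "s \<in> I \<Longrightarrow> dat wv s y"
  unfolding grad_def by (rule dat_scaleR[OF dcomp[OF _ difhp] dat_vec]) (auto intro: dpdS)

lemma divgwv: "s \<in> I \<Longrightarrow> divg wv s y = (\<Sum>j\<in>UNIV. H1 s y * pd j (pd j S) s y + pd j H1 s y * pd j S s y)"
proof -
  assume s: "s \<in> I"
  have "\<And>j. pd j wv s y $ j = H1 s y * pd j (pd j S) s y + pd j H1 s y * pd j S s y"
  proof -
    fix j
    have "pd j wv s y $ j = pd j (\<lambda>s y. wv s y $ j) s y" by (rule pd_nth[OF dwv[OF s], symmetric])
    also have "\<dots> = pd j (\<lambda>s y. H1 s y * pd j S s y) s y" by (simp add: grad_def)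
    also have "\<dots> = H1 s y * pd j (pd j S) s y + pd j H1 s y * pd j S s y"
      by (rule pd_mult[OF dcomp[OF s difhp] dpdS[OF s]])
    finally show "pd j wv s y $ j = H1 s y * pd j (pd j S) s y + pd j H1 s y * pd j S s y" .
  qed
  thus ?thesis unfolding divg_def by simp
qed

lemma qeq1: "s \<in> I \<Longrightarrow> qf s y = (\<Sum>j\<in>UNIV. H1 s y * (H1 s y * (sq1 (\<rho> s y) * pd j (pd j \<rho>) s y + sq2 (\<rho> s y) * pd j \<rho> s y * pd j \<rho> s y)
                    + h2f \<gamma> \<epsilon> (\<rho> s y) * pd j \<rho> s y * (sq1 (\<rho> s y) * pd j \<rho> s y)) / S s y)"
proof -
  assume s: "s \<in> I"
  have "qf s y = H1 s y * (\<Sum>j\<in>UNIV. H1 s y * pd j (pd j S) s y + pd j H1 s y * pd j S s y) / S s y"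
    by (simp only: divgwv[OF s])
  also have "\<dots> = (\<Sum>j\<in>UNIV. H1 s y * (H1 s y * pd j (pd j S) s y + pd j H1 s y * pd j S s y) / S s y)"
    by (simp only: sum_distrib_left sum_divide_distrib)
  also have "\<dots> = (\<Sum>j\<in>UNIV. H1 s y * (H1 s y * (sq1 (\<rho> s y) * pd j (pd j \<rho>) s y + sq2 (\<rho> s y) * pd j \<rho> s y * pd j \<rho> s y)
                    + h2f \<gamma> \<epsilon> (\<rho> s y) * pd j \<rho> s y * (sq1 (\<rho> s y) * pd j \<rho> s y)) / S s y)"
    by (simp only: pdpdS[OF s] pdH1[OF s] pdS[OF s])
  finally show ?thesis .
qed

lemma qeq3: "s \<in> I \<Longrightarrow> (\<Sum>j\<in>UNIV. (H1 s y * (k1f \<gamma> \<epsilon> (\<rho> s y) * pd j (pd j \<rho>) s y + k2f \<gamma> \<epsilon> (\<rho> s y) * pd j \<rho> s y * pd j \<rho> s y)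
                    + (1/2) * ((k1f \<gamma> \<epsilon> (\<rho> s y) * pd j \<rho> s y) * (k1f \<gamma> \<epsilon> (\<rho> s y) * pd j \<rho> s y))) / 2) = Q2 s y / 2"
proof -
  assume s: "s \<in> I"
  have "Q2 s y = H1 s y * (\<Sum>j\<in>UNIV. k1f \<gamma> \<epsilon> (\<rho> s y) * pd j (pd j \<rho>) s y + k2f \<gamma> \<epsilon> (\<rho> s y) * pd j \<rho> s y * pd j \<rho> s y)
      + (1/2) * (\<Sum>j\<in>UNIV. (k1f \<gamma> \<epsilon> (\<rho> s y) * pd j \<rho> s y) * (k1f \<gamma> \<epsilon> (\<rho> s y) * pd j \<rho> s y))"
    by (simp only: pdpdPhi[OF s] pdPhi[OF s])
  also have "\<dots> = (\<Sum>j\<in>UNIV. (H1 s y * (k1f \<gamma> \<epsilon> (\<rho> s y) * pd j (pd j \<rho>) s y + k2f \<gamma> \<epsilon> (\<rho> s y) * pd j \<rho> s y * pd j \<rho> s y)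
                    + (1/2) * ((k1f \<gamma> \<epsilon> (\<rho> s y) * pd j \<rho> s y) * (k1f \<gamma> \<epsilon> (\<rho> s y) * pd j \<rho> s y))))"
    by (simp add: sum.distrib sum_distrib_left distrib_left)
  finally show ?thesis by (simp add: sum_divide_distrib)
qed

lemma qeq: "s \<in> I \<Longrightarrow> qf s y = Q2 s y / 2"
proof -
  assume s: "s \<in> I"
  have r: "0 < \<rho> s y" by (rule rpos)
  have Q: "0 < S s y" "S s y * S s y = \<rho> s y" using r by simp_all
  have k1: "k1f \<gamma> \<epsilon> (\<rho> s y) = H1 s y / \<rho> s y" using hp_eq[OF r] by (simp add: k1f_def)
  have k2: "k2f \<gamma> \<epsilon> (\<rho> s y) = h2f \<gamma> \<epsilon> (\<rho> s y) / \<rho> s y - H1 s y / (\<rho> s y)^2" using hp_eq[OF r] by (simp add: k2f_def)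
  have s1: "sq1 (\<rho> s y) = 1 / (2 * S s y)" unfolding sq1_def by (simp add: inverse_eq_divide)
  have s2: "sq2 (\<rho> s y) = - 1 / (4 * \<rho> s y * S s y)" unfolding sq2_def by (simp add: inverse_eq_divide)
  have tm: "H1 s y * (H1 s y * (sq1 (\<rho> s y) * b + sq2 (\<rho> s y) * a * a)
                    + h2f \<gamma> \<epsilon> (\<rho> s y) * a * (sq1 (\<rho> s y) * a)) / S s y
     = (H1 s y * (k1f \<gamma> \<epsilon> (\<rho> s y) * b + k2f \<gamma> \<epsilon> (\<rho> s y) * a * a)
                    + (1/2) * ((k1f \<gamma> \<epsilon> (\<rho> s y) * a) * (k1f \<gamma> \<epsilon> (\<rho> s y) * a))) / 2" for a b
    by (rule qalg2[OF Q k1 k2 s1 s2])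
  have "qf s y = (\<Sum>j\<in>UNIV. (H1 s y * (k1f \<gamma> \<epsilon> (\<rho> s y) * pd j (pd j \<rho>) s y + k2f \<gamma> \<epsilon> (\<rho> s y) * pd j \<rho> s y * pd j \<rho> s y)
                    + (1/2) * ((k1f \<gamma> \<epsilon> (\<rho> s y) * pd j \<rho> s y) * (k1f \<gamma> \<epsilon> (\<rho> s y) * pd j \<rho> s y))) / 2)"
    unfolding qeq1[OF s] by (rule sum.cong[OF refl]) (rule tm)
  thus ?thesis using qeq3[OF s] by simp
qed


lemma dQ2: "s \<in> I \<Longrightarrow> dat Q2 s y"
  by (rule dat_add[OF dat_mult[OF dcomp[OF _ difhp] dat_sum] dat_cmult[OF dat_sum]])
     (auto intro: dpdpdPhi dat_mult[OF dpdPhi dpdPhi])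

lemma ddW0: "s \<in> I \<Longrightarrow> dat dW0 s y"
  by (rule dat_sum) (auto intro: dpdpdPhi)

lemma pddW0: "t \<in> I \<Longrightarrow> pd i dW0 t x = (\<Sum>j\<in>UNIV. pd i (pd j (pd j \<Phi>)) t x)"
  by (rule pd_sum) (auto intro: dpdpdPhi)

lemma pdQ2: "t \<in> I \<Longrightarrow> pd i Q2 t x = pd i H1 t x * dW0 t x + H1 t x * pd i dW0 t x
     + (\<Sum>j\<in>UNIV. pd j \<Phi> t x * pd i (pd j \<Phi>) t x)"
proof -
  assume t: "t \<in> I"
  have a: "pd i Q2 t x = pd i (\<lambda>s y. H1 s y * dW0 s y) t x
      + pd i (\<lambda>s y. (1/2) * (\<Sum>j\<in>UNIV. pd j \<Phi> s y * pd j \<Phi> s y)) t x"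
    by (rule pd_add[OF dat_mult[OF dcomp[OF t difhp] ddW0[OF t]] dat_cmult[OF dat_sum]])
       (auto intro: dat_mult[OF dpdPhi[OF t] dpdPhi[OF t]])
  have b: "pd i (\<lambda>s y. H1 s y * dW0 s y) t x = H1 t x * pd i dW0 t x + pd i H1 t x * dW0 t x"
    by (rule pd_mult[OF dcomp[OF t difhp] ddW0[OF t]])
  have c: "pd i (\<lambda>s y. (1/2) * (\<Sum>j\<in>UNIV. pd j \<Phi> s y * pd j \<Phi> s y)) t x
      = (1/2) * pd i (\<lambda>s y. \<Sum>j\<in>UNIV. pd j \<Phi> s y * pd j \<Phi> s y) t x"
    by (rule pd_cmult[OF dat_sum]) (auto intro: dat_mult[OF dpdPhi[OF t] dpdPhi[OF t]])
  have d: "pd i (\<lambda>s y. \<Sum>j\<in>UNIV. pd j \<Phi> s y * pd j \<Phi> s y) t x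
      = (\<Sum>j\<in>UNIV. pd i (\<lambda>s y. pd j \<Phi> s y * pd j \<Phi> s y) t x)"
    by (rule pd_sum) (auto intro: dat_mult[OF dpdPhi[OF t] dpdPhi[OF t]])
  have e: "\<And>j. pd i (\<lambda>s y. pd j \<Phi> s y * pd j \<Phi> s y) t x = 2 * (pd j \<Phi> t x * pd i (pd j \<Phi>) t x)"
    using pd_mult[OF dpdPhi[OF t] dpdPhi[OF t]] by simp
  have "(1/2) * (\<Sum>j\<in>UNIV. 2 * (pd j \<Phi> t x * pd i (pd j \<Phi>) t x)) = (\<Sum>j\<in>UNIV. pd j \<Phi> t x * pd i (pd j \<Phi>) t x)"
    by (simp add: sum_distrib_left[symmetric])
  thus ?thesis unfolding a b c d e by simp
qed

lemma grad_nth: "grad f t x $ i = pd i f t x"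
  by (simp add: grad_def)

lemma divK_nth: "divK \<gamma> \<epsilon> \<rho> t x $ i = 2 * \<rho> t x * pd i qf t x"
  by (simp add: divK_def Let_def grad_nth)

lemma Zlem:
  assumes t: "t \<in> I"
  shows "divK \<gamma> \<epsilon> \<rho> t x $ i
     - (\<Sum>j\<in>UNIV. pd j (\<lambda>s y. H s y * ((pd j (pd i \<Phi>) s y + pd i (pd j \<Phi>) s y) / 2)) t x)
     - pd i (\<lambda>s y. G s y * dW0 s y) t x = 0"
proof -
  have q: "pd i qf t x = (1/2) * pd i Q2 t x"
  proof -
    have "pd i qf t x = pd i (\<lambda>s y. (1/2) * Q2 s y) t x"
      by (rule pd_slice) (simp add: qeq[OF t])
    also have "\<dots> = (1/2) * pd i Q2 t x" by (rule pd_cmult[OF dQ2[OF t]])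
    finally show ?thesis .
  qed
  have o: "\<And>j. pd j (\<lambda>s y. H s y * ((pd j (pd i \<Phi>) s y + pd i (pd j \<Phi>) s y) / 2)) t x
      = H t x * pd i (pd j (pd j \<Phi>)) t x + \<rho> t x * (pd j \<Phi> t x * pd i (pd j \<Phi>) t x)"
  proof -
    fix j
    have "pd j (\<lambda>s y. H s y * ((pd j (pd i \<Phi>) s y + pd i (pd j \<Phi>) s y) / 2)) t x
        = pd j (\<lambda>s y. H s y * pd i (pd j \<Phi>) s y) t x"
      by (rule pd_slice) (simp add: comm2Phi[OF t])
    also have "\<dots> = H t x * pd j (pd i (pd j \<Phi>)) t x + pd j H t x * pd i (pd j \<Phi>) t x"
      by (rule pd_mult[OF dcomp[OF t difh] dpdpdPhi[OF t]])
    also have "pd j (pd i (pd j \<Phi>)) t x = pd i (pd j (pd j \<Phi>)) t x" by (rule comm3Phi[OF t])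
    also have "pd j H t x = \<rho> t x * pd j \<Phi> t x" by (rule E1[OF t, symmetric])
    finally show "pd j (\<lambda>s y. H s y * ((pd j (pd i \<Phi>) s y + pd i (pd j \<Phi>) s y) / 2)) t x
      = H t x * pd i (pd j (pd j \<Phi>)) t x + \<rho> t x * (pd j \<Phi> t x * pd i (pd j \<Phi>) t x)" by simp
  qed
  have g: "pd i (\<lambda>s y. G s y * dW0 s y) t x = G t x * pd i dW0 t x + \<rho> t x * pd i H1 t x * dW0 t x"
    using pd_mult[OF dcomp[OF t difg] ddW0[OF t], of i] pdG[OF t, of i x] by simp
  have so: "(\<Sum>j\<in>UNIV. pd j (\<lambda>s y. H s y * ((pd j (pd i \<Phi>) s y + pd i (pd j \<Phi>) s y) / 2)) t x)
      = H t x * pd i dW0 t x + \<rho> t x * (\<Sum>j\<in>UNIV. pd j \<Phi> t x * pd i (pd j \<Phi>) t x)"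
    unfolding o pddW0[OF t] by (simp add: sum.distrib sum_distrib_left)
  have r: "0 < \<rho> t x" by (rule rpos)
  show ?thesis unfolding divK_nth q pdQ2[OF t] so g
    by (simp add: g_eps_def algebra_simps)
qed

end


context sys begin

abbreviation "vf c \<equiv> \<lambda>s y. u s y + c *\<^sub>R grad \<Phi> s y"
abbreviation "D0 \<equiv> divg (\<lambda>s y. \<rho> s y *\<^sub>R u s y)"

lemma T1:
  assumes mass: "\<forall>t\<in>I. \<forall>x. dt \<rho> t x + divg (\<lambda>s y. \<rho> s y *\<^sub>R u s y) t x = 0"
    and t: "t \<in> I"
  shows "dt (\<lambda>s y. \<rho> s y *\<^sub>R vf c s y) t x $ i
     = dt (\<lambda>s y. \<rho> s y *\<^sub>R u s y) t x $ i - c * pd i (\<lambda>s y. H1 s y * D0 s y) t x"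
proof -
  have dD: "dat (\<lambda>s y. H1 s y * D0 s y) t x"
    by (rule dat_mult[OF dcomp[OF t difhp] D0[OF mass t]])
  have "dt (\<lambda>s y. \<rho> s y *\<^sub>R vf c s y) t x $ i = dt (\<lambda>s y. (\<rho> s y *\<^sub>R vf c s y) $ i) t x"
    by (rule dt_nth[OF drv[OF t], symmetric])
  also have "\<dots> = dt (\<lambda>s y. \<rho> s y * U i s y + c * pd i H s y) t x"
    by (rule dt_cong[OF oI t]) (rule rvcomp)
  also have "\<dots> = dt (\<lambda>s y. \<rho> s y * U i s y) t x + dt (\<lambda>s y. c * pd i H s y) t x"
    by (rule dt_add[OF dat_mult[OF dR[OF t] dU[OF t]] dat_cmult[OF dpdH[OF t]]])
  also have "dt (\<lambda>s y. c * pd i H s y) t x = c * dt (pd i H) t x"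
    by (rule dt_cmult[OF dpdH[OF t]])
  also have "dt (\<lambda>s y. \<rho> s y * U i s y) t x = dt (\<lambda>s y. \<rho> s y *\<^sub>R u s y) t x $ i"
    using dt_nth[OF dru[OF t], of i] by simp
  also have "dt (pd i H) t x = pd i (dt H) t x"
  proof (rule dt_pd_comm[OF oI t])
    show "\<And>s y. s \<in> I \<Longrightarrow> dat H s y" by (rule dcomp[OF _ difh])
    show "dat (pd i H) t x" by (rule dpdH[OF t])
    show "dat (dt H) t x"
      by (rule dat_cong[OF oI t _ dat_mult[OF dcomp[OF t difhp] dRt[OF t]]]) (rule dtH)
  qed
  also have "pd i (dt H) t x = pd i (\<lambda>s y. (-1) * (H1 s y * D0 s y)) t x"
  proof (rule pd_slice)
    fix y
    show "dt H t y = (-1) * (H1 t y * D0 t y)"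
      using dtH[OF t, of y] mass t by (simp add: add_eq_0_iff)
  qed
  also have "\<dots> = (-1) * pd i (\<lambda>s y. H1 s y * D0 s y) t x"
    by (rule pd_cmult[OF dD])
  finally show ?thesis by simp
qed

lemma rvv: "s \<in> I \<Longrightarrow> (\<rho> s y *\<^sub>R outer (vf c s y) (vf c s y)) $ i $ j
   = \<rho> s y * (U i s y * U j s y) + c * (U i s y * pd j H s y + pd i H s y * U j s y)
     + c^2 * (pd i \<Phi> s y * pd j H s y)"
proof -
  assume s: "s \<in> I"
  show ?thesis
    unfolding E1[OF s, symmetric] by (simp add: outer_def grad_def algebra_simps power2_eq_square)
qed

lemma T2:
  assumes t: "t \<in> I"
  shows "divM (\<lambda>s y. \<rho> s y *\<^sub>R outer (vf c s y) (vf c s y)) t x $ i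
     = (\<Sum>j\<in>UNIV. pd j (\<lambda>s y. \<rho> s y * (U i s y * U j s y)) t x)
     + c * (\<Sum>j\<in>UNIV. pd j (\<lambda>s y. U i s y * pd j H s y + pd i H s y * U j s y) t x)
     + c^2 * (\<Sum>j\<in>UNIV. pd j (\<lambda>s y. pd i \<Phi> s y * pd j H s y) t x)"
proof -
  have dM: "dat (\<lambda>s y. \<rho> s y *\<^sub>R outer (vf c s y) (vf c s y)) t x"
  proof (rule dat_comps2)
    fix a b
    show "dat (\<lambda>s y. (\<rho> s y *\<^sub>R outer (vf c s y) (vf c s y)) $ a $ b) t x"
      unfolding outer_def vcomp
      by (simp, rule dat_mult[OF dR[OF t] dat_mult[OF dat_add[OF dU[OF t] dat_cmult[OF dpdPhi[OF t]]] dat_add[OF dU[OF t] dat_cmult[OF dpdPhi[OF t]]]]])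
  qed
  have j: "\<And>j. pd j (\<lambda>s y. (\<rho> s y *\<^sub>R outer (vf c s y) (vf c s y)) $ i $ j) t x
      = pd j (\<lambda>s y. \<rho> s y * (U i s y * U j s y)) t x
     + c * pd j (\<lambda>s y. U i s y * pd j H s y + pd i H s y * U j s y) t x
     + c^2 * pd j (\<lambda>s y. pd i \<Phi> s y * pd j H s y) t x"
  proof -
    fix j
    have d1: "dat (\<lambda>s y. \<rho> s y * (U i s y * U j s y)) t x"
      by (rule dat_mult[OF dR[OF t] dat_mult[OF dU[OF t] dU[OF t]]])
    have d2: "dat (\<lambda>s y. U i s y * pd j H s y + pd i H s y * U j s y) t x"
      by (rule dat_add[OF dat_mult[OF dU[OF t] dpdH[OF t]] dat_mult[OF dpdH[OF t] dU[OF t]]])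
    have d3: "dat (\<lambda>s y. pd i \<Phi> s y * pd j H s y) t x"
      by (rule dat_mult[OF dpdPhi[OF t] dpdH[OF t]])
    have "pd j (\<lambda>s y. (\<rho> s y *\<^sub>R outer (vf c s y) (vf c s y)) $ i $ j) t x
        = pd j (\<lambda>s y. (\<rho> s y * (U i s y * U j s y) + c * (U i s y * pd j H s y + pd i H s y * U j s y))
                 + c^2 * (pd i \<Phi> s y * pd j H s y)) t x"
      by (rule pd_slice) (rule rvv[OF t])
    also have "\<dots> = pd j (\<lambda>s y. \<rho> s y * (U i s y * U j s y) + c * (U i s y * pd j H s y + pd i H s y * U j s y)) t x
                   + pd j (\<lambda>s y. c^2 * (pd i \<Phi> s y * pd j H s y)) t x"
      by (rule pd_add[OF dat_add[OF d1 dat_cmult[OF d2]] dat_cmult[OF d3]])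
    also have "pd j (\<lambda>s y. \<rho> s y * (U i s y * U j s y) + c * (U i s y * pd j H s y + pd i H s y * U j s y)) t x
        = pd j (\<lambda>s y. \<rho> s y * (U i s y * U j s y)) t x + pd j (\<lambda>s y. c * (U i s y * pd j H s y + pd i H s y * U j s y)) t x"
      by (rule pd_add[OF d1 dat_cmult[OF d2]])
    also have "pd j (\<lambda>s y. c * (U i s y * pd j H s y + pd i H s y * U j s y)) t x
        = c * pd j (\<lambda>s y. U i s y * pd j H s y + pd i H s y * U j s y) t x"
      by (rule pd_cmult[OF d2])
    also have "pd j (\<lambda>s y. c^2 * (pd i \<Phi> s y * pd j H s y)) t x = c^2 * pd j (\<lambda>s y. pd i \<Phi> s y * pd j H s y) t x"
      by (rule pd_cmult[OF d3])
    finally show "pd j (\<lambda>s y. (\<rho> s y *\<^sub>R outer (vf c s y) (vf c s y)) $ i $ j) t x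
      = pd j (\<lambda>s y. \<rho> s y * (U i s y * U j s y)) t x
     + c * pd j (\<lambda>s y. U i s y * pd j H s y + pd i H s y * U j s y) t x
     + c^2 * pd j (\<lambda>s y. pd i \<Phi> s y * pd j H s y) t x" .
  qed
  show ?thesis unfolding divM_comp[OF dM] j by (simp add: sum.distrib sum_distrib_left)
qed


lemma hv_eq: "(\<lambda>s y. (H s y *\<^sub>R vf c s y) $ k) = (\<lambda>s y. H s y * U k s y + c * (H s y * pd k \<Phi> s y))"
  by (simp add: grad_def algebra_simps)

lemma pdhv: "s \<in> I \<Longrightarrow> pd j (\<lambda>s y. H s y * U k s y + c * (H s y * pd k \<Phi> s y)) s y
   = pd j (\<lambda>s y. H s y * U k s y) s y + c * pd j (\<lambda>s y. H s y * pd k \<Phi> s y) s y"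
proof -
  assume s: "s \<in> I"
  have dW: "dat (\<lambda>s y. H s y * pd k \<Phi> s y) s y" by (rule dat_mult[OF dcomp[OF s difh] dpdPhi[OF s]])
  show ?thesis using pd_add[OF dHU[OF s] dat_cmult[OF dW], of j] pd_cmult[OF dW, of j c] by simp
qed

lemma T5:
  assumes t: "t \<in> I"
  shows "lap (\<lambda>s y. H s y *\<^sub>R vf c s y) t x $ i
     = (\<Sum>j\<in>UNIV. pd j (pd j (\<lambda>s y. H s y * U i s y)) t x)
     + c * (\<Sum>j\<in>UNIV. pd j (pd j (\<lambda>s y. H s y * pd i \<Phi> s y)) t x)"
proof -
  have dF: "\<And>s y. s \<in> I \<Longrightarrow> dat (\<lambda>s y. H s y *\<^sub>R vf c s y) s y"
    by (rule dat_scaleR[OF dcomp[OF _ difh] dv])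
  have d1: "dat (pd j (\<lambda>s y. (H s y *\<^sub>R vf c s y) $ k)) t x" for j k
    unfolding hv_eq
    by (rule dat_cong[OF oI t pdhv dat_add[OF dpdHU[OF t] dat_cmult[OF dpdHW[OF t]]]])
  have j: "pd j (pd j (\<lambda>s y. (H s y *\<^sub>R vf c s y) $ i)) t x
      = pd j (pd j (\<lambda>s y. H s y * U i s y)) t x + c * pd j (pd j (\<lambda>s y. H s y * pd i \<Phi> s y)) t x" for j
  proof -
    have "pd j (pd j (\<lambda>s y. (H s y *\<^sub>R vf c s y) $ i)) t x
        = pd j (\<lambda>s y. pd j (\<lambda>s y. H s y * U i s y) s y + c * pd j (\<lambda>s y. H s y * pd i \<Phi> s y) s y) t x"
      unfolding hv_eq by (rule pd_slice) (rule pdhv[OF t])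
    also have "\<dots> = pd j (pd j (\<lambda>s y. H s y * U i s y)) t x + pd j (\<lambda>s y. c * pd j (\<lambda>s y. H s y * pd i \<Phi> s y) s y) t x"
      by (rule pd_add[OF dpdHU[OF t] dat_cmult[OF dpdHW[OF t]]])
    also have "pd j (\<lambda>s y. c * pd j (\<lambda>s y. H s y * pd i \<Phi> s y) s y) t x = c * pd j (pd j (\<lambda>s y. H s y * pd i \<Phi> s y)) t x"
      by (rule pd_cmult[OF dpdHW[OF t]])
    finally show ?thesis .
  qed
  have "lap (\<lambda>s y. H s y *\<^sub>R vf c s y) t x $ i = (\<Sum>j\<in>UNIV. pd j (pd j (\<lambda>s y. (H s y *\<^sub>R vf c s y) $ i)) t x)"
    by (rule lap_comp[OF oI t dF d1])
  thus ?thesis unfolding j by (simp add: sum.distrib sum_distrib_left)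
qed

lemma hsv: "s \<in> I \<Longrightarrow> (H s y *\<^sub>R symgrad (vf c) s y) $ a $ b
   = H s y * ((pd b (U a) s y + pd a (U b) s y) / 2) + c * (H s y * ((pd b (pd a \<Phi>) s y + pd a (pd b \<Phi>) s y) / 2))"
proof -
  assume s: "s \<in> I"
  show ?thesis unfolding symgrad_def by (simp add: pdv[OF s] field_simps)
qed

lemma T7:
  assumes t: "t \<in> I"
  shows "divM (\<lambda>s y. H s y *\<^sub>R symgrad (vf c) s y) t x $ i
     = (\<Sum>j\<in>UNIV. pd j (\<lambda>s y. H s y * ((pd j (U i) s y + pd i (U j) s y) / 2)) t x)
     + c * (\<Sum>j\<in>UNIV. pd j (\<lambda>s y. H s y * ((pd j (pd i \<Phi>) s y + pd i (pd j \<Phi>) s y) / 2)) t x)"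
proof -
  have dA: "dat (\<lambda>s y. H s y * ((pd b (U a) s y + pd a (U b) s y) / 2)) t x" for a b
    by (rule dat_mult[OF dcomp[OF t difh] dat_cdiv[OF dat_add[OF dU1[OF t] dU1[OF t]]]])
  have dB: "dat (\<lambda>s y. H s y * ((pd b (pd a \<Phi>) s y + pd a (pd b \<Phi>) s y) / 2)) t x" for a b
    by (rule dat_mult[OF dcomp[OF t difh] dat_cdiv[OF dat_add[OF dpdpdPhi[OF t] dpdpdPhi[OF t]]]])
  have dM: "dat (\<lambda>s y. H s y *\<^sub>R symgrad (vf c) s y) t x"
  proof (rule dat_comps2)
    fix a b
    show "dat (\<lambda>s y. (H s y *\<^sub>R symgrad (vf c) s y) $ a $ b) t x"
      by (rule dat_cong[OF oI t hsv dat_add[OF dA dat_cmult[OF dB]]])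
  qed
  have j: "pd j (\<lambda>s y. (H s y *\<^sub>R symgrad (vf c) s y) $ i $ j) t x
     = pd j (\<lambda>s y. H s y * ((pd j (U i) s y + pd i (U j) s y) / 2)) t x
     + c * pd j (\<lambda>s y. H s y * ((pd j (pd i \<Phi>) s y + pd i (pd j \<Phi>) s y) / 2)) t x" for j
  proof -
    have "pd j (\<lambda>s y. (H s y *\<^sub>R symgrad (vf c) s y) $ i $ j) t x
       = pd j (\<lambda>s y. H s y * ((pd j (U i) s y + pd i (U j) s y) / 2) + c * (H s y * ((pd j (pd i \<Phi>) s y + pd i (pd j \<Phi>) s y) / 2))) t x"
      by (rule pd_slice) (rule hsv[OF t])
    also have "\<dots> = pd j (\<lambda>s y. H s y * ((pd j (U i) s y + pd i (U j) s y) / 2)) t x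
       + pd j (\<lambda>s y. c * (H s y * ((pd j (pd i \<Phi>) s y + pd i (pd j \<Phi>) s y) / 2))) t x"
      by (rule pd_add[OF dA dat_cmult[OF dB]])
    also have "pd j (\<lambda>s y. c * (H s y * ((pd j (pd i \<Phi>) s y + pd i (pd j \<Phi>) s y) / 2))) t x
       = c * pd j (\<lambda>s y. H s y * ((pd j (pd i \<Phi>) s y + pd i (pd j \<Phi>) s y) / 2)) t x"
      by (rule pd_cmult[OF dB])
    finally show ?thesis .
  qed
  show ?thesis unfolding divM_comp[OF dM] j by (simp add: sum.distrib sum_distrib_left)
qed

lemma divgv: "s \<in> I \<Longrightarrow> divg (vf c) s y = divg u s y + c * dW0 s y"
  unfolding divg_def by (simp add: pdv pdU sum.distrib sum_distrib_left)

lemma T8: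
  assumes t: "t \<in> I"
  shows "grad (\<lambda>s y. G s y * divg (vf c) s y) t x $ i
     = pd i (\<lambda>s y. G s y * divg u s y) t x + c * pd i (\<lambda>s y. G s y * dW0 s y) t x"
proof -
  have d1: "dat (\<lambda>s y. G s y * divg u s y) t x" by (rule dat_mult[OF dcomp[OF t difg] ddivu[OF t]])
  have d2: "dat (\<lambda>s y. G s y * dW0 s y) t x" by (rule dat_mult[OF dcomp[OF t difg] ddW0[OF t]])
  have "grad (\<lambda>s y. G s y * divg (vf c) s y) t x $ i = pd i (\<lambda>s y. G s y * divg u s y + c * (G s y * dW0 s y)) t x"
    unfolding grad_nth by (rule pd_slice) (simp add: divgv[OF t] algebra_simps)
  also have "\<dots> = pd i (\<lambda>s y. G s y * divg u s y) t x + pd i (\<lambda>s y. c * (G s y * dW0 s y)) t x"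
    by (rule pd_add[OF d1 dat_cmult[OF d2]])
  also have "pd i (\<lambda>s y. c * (G s y * dW0 s y)) t x = c * pd i (\<lambda>s y. G s y * dW0 s y) t x"
    by (rule pd_cmult[OF d2])
  finally show ?thesis .
qed


lemma Mu:
  assumes t: "t \<in> I"
  shows "divM (\<lambda>s y. \<rho> s y *\<^sub>R outer (u s y) (u s y)) t x $ i = (\<Sum>j\<in>UNIV. pd j (\<lambda>s y. \<rho> s y * (U i s y * U j s y)) t x)"
proof -
  have dM: "dat (\<lambda>s y. \<rho> s y *\<^sub>R outer (u s y) (u s y)) t x"
  proof (rule dat_comps2)
    fix a b
    show "dat (\<lambda>s y. (\<rho> s y *\<^sub>R outer (u s y) (u s y)) $ a $ b) t x"
      unfolding outer_def by (simp, rule dat_mult[OF dR[OF t] dat_mult[OF dU[OF t] dU[OF t]]])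
  qed
  show ?thesis unfolding divM_comp[OF dM] by (simp add: outer_def)
qed

lemma stc: "s \<in> I \<Longrightarrow> stress \<gamma> \<epsilon> \<rho> u s y $ a $ b
   = H s y * ((pd b (U a) s y + pd a (U b) s y) / 2) + (if a = b then 1 else 0) * (G s y * divg u s y)"
proof -
  assume s: "s \<in> I"
  show ?thesis unfolding stress_def symgrad_def mat_def by (simp add: pdU[OF s])
qed

lemma Mst:
  assumes t: "t \<in> I"
  shows "divM (stress \<gamma> \<epsilon> \<rho> u) t x $ i
     = (\<Sum>j\<in>UNIV. pd j (\<lambda>s y. H s y * ((pd j (U i) s y + pd i (U j) s y) / 2)) t x)
       + pd i (\<lambda>s y. G s y * divg u s y) t x"
proof -
  have dA: "dat (\<lambda>s y. H s y * ((pd b (U a) s y + pd a (U b) s y) / 2)) t x" for a b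
    by (rule dat_mult[OF dcomp[OF t difh] dat_cdiv[OF dat_add[OF dU1[OF t] dU1[OF t]]]])
  have dB: "dat (\<lambda>s y. G s y * divg u s y) t x" by (rule dat_mult[OF dcomp[OF t difg] ddivu[OF t]])
  have dM: "dat (stress \<gamma> \<epsilon> \<rho> u) t x"
  proof (rule dat_comps2)
    fix a b
    show "dat (\<lambda>s y. stress \<gamma> \<epsilon> \<rho> u s y $ a $ b) t x"
      by (rule dat_cong[OF oI t stc dat_add[OF dA dat_cmult[OF dB]]])
  qed
  have j: "pd j (\<lambda>s y. stress \<gamma> \<epsilon> \<rho> u s y $ i $ j) t x
     = pd j (\<lambda>s y. H s y * ((pd j (U i) s y + pd i (U j) s y) / 2)) t x
       + (if i = j then 1 else 0) * pd j (\<lambda>s y. G s y * divg u s y) t x" for j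
  proof -
    have "pd j (\<lambda>s y. stress \<gamma> \<epsilon> \<rho> u s y $ i $ j) t x
       = pd j (\<lambda>s y. H s y * ((pd j (U i) s y + pd i (U j) s y) / 2) + (if i = j then 1 else 0) * (G s y * divg u s y)) t x"
      by (rule pd_slice) (rule stc[OF t])
    also have "\<dots> = pd j (\<lambda>s y. H s y * ((pd j (U i) s y + pd i (U j) s y) / 2)) t x
       + pd j (\<lambda>s y. (if i = j then 1 else 0) * (G s y * divg u s y)) t x"
      by (rule pd_add[OF dA dat_cmult[OF dB]])
    also have "pd j (\<lambda>s y. (if i = j then 1 else 0) * (G s y * divg u s y)) t x
       = (if i = j then 1 else 0) * pd j (\<lambda>s y. G s y * divg u s y) t x"
      by (rule pd_cmult[OF dB])
    finally show ?thesis .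
  qed
  have "divM (stress \<gamma> \<epsilon> \<rho> u) t x $ i = (\<Sum>j\<in>UNIV. pd j (\<lambda>s y. stress \<gamma> \<epsilon> \<rho> u s y $ i $ j) t x)"
    by (rule divM_comp[OF dM])
  also have "\<dots> = (\<Sum>j\<in>UNIV. pd j (\<lambda>s y. H s y * ((pd j (U i) s y + pd i (U j) s y) / 2)) t x
       + (if i = j then 1 else 0) * pd j (\<lambda>s y. G s y * divg u s y) t x)"
    by (rule sum.cong[OF refl]) (rule j)
  also have "\<dots> = (\<Sum>j\<in>UNIV. pd j (\<lambda>s y. H s y * ((pd j (U i) s y + pd i (U j) s y) / 2)) t x)
       + pd i (\<lambda>s y. G s y * divg u s y) t x"
  proof -
    have "\<And>j. (if i = j then 1 else 0) * pd j (\<lambda>s y. G s y * divg u s y) t x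
        = (if i = j then pd j (\<lambda>s y. G s y * divg u s y) t x else 0)" by simp
    thus ?thesis by (simp add: sum.distrib sum.delta)
  qed
  finally show ?thesis .
qed

lemma Mg:
  assumes t: "t \<in> I"
  shows "grad (\<lambda>s y. \<rho> s y powr \<gamma> + p (\<rho> s y)) t x $ i = pd i (\<lambda>s y. \<rho> s y powr \<gamma>) t x + pd i (\<lambda>s y. p (\<rho> s y)) t x"
proof -
  have d1: "dat (\<lambda>s y. \<rho> s y powr \<gamma>) t x" using dcomp[OF t difpowr] by simp
  have d2: "dat (\<lambda>s y. p (\<rho> s y)) t x" by (rule dcomp[OF t difp])
  show ?thesis unfolding grad_nth by (rule pd_add[OF d1 d2])
qed

lemma mupos: "0 < mu \<nu> \<kappa>"
proof -
  have "sqrt (\<nu>\<^sup>2 - \<kappa>\<^sup>2) < sqrt (\<nu>\<^sup>2)" using par by (intro real_sqrt_less_mono) auto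
  also have "\<dots> = \<nu>" using par by simp
  finally show ?thesis by (simp add: mu_def)
qed

lemma gP:
  assumes t: "t \<in> I"
  shows "ptil_eps \<epsilon> (\<rho> t x) * (c * pd i \<Phi> t x) = c / mu \<nu> \<kappa> * pd i (\<lambda>s y. p (\<rho> s y)) t x"
proof -
  have r: "0 < \<rho> t x" by (rule rpos)
  have m: "mu \<nu> \<kappa> \<noteq> 0" using mupos by simp
  show ?thesis unfolding pdP[OF t] pdPhi[OF t] k1f_def using hp_eq[OF r] r m by (simp add: field_simps)
qed


lemma mom_v:
  assumes mass: "\<forall>t\<in>I. \<forall>x. dt \<rho> t x + divg (\<lambda>s y. \<rho> s y *\<^sub>R u s y) t x = 0"
    and mom: "\<forall>t\<in>I. \<forall>x.
        dt (\<lambda>s y. \<rho> s y *\<^sub>R u s y) t x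
        + divM (\<lambda>s y. \<rho> s y *\<^sub>R outer (u s y) (u s y)) t x
        - (2 * \<nu>) *\<^sub>R divM (stress \<gamma> \<epsilon> \<rho> u) t x
        + grad (\<lambda>s y. \<rho> s y powr \<gamma> + p (\<rho> s y)) t x
        + ptil_eps \<epsilon> (\<rho> t x) *\<^sub>R u t x
        = \<kappa>\<^sup>2 *\<^sub>R divK \<gamma> \<epsilon> \<rho> t x"
    and t: "t \<in> I"
  shows "dt (\<lambda>s y. \<rho> s y *\<^sub>R vf c s y) t x
        + divM (\<lambda>s y. \<rho> s y *\<^sub>R outer (vf c s y) (vf c s y)) t x
        + grad (\<lambda>s y. \<rho> s y powr \<gamma>) t x
        + ((mu \<nu> \<kappa> - c) / mu \<nu> \<kappa>) *\<^sub>R grad (\<lambda>s y. p (\<rho> s y)) t x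
        - c *\<^sub>R lap (\<lambda>s y. h_eps \<gamma> \<epsilon> (\<rho> s y) *\<^sub>R vf c s y) t x
        + ptil_eps \<epsilon> (\<rho> t x) *\<^sub>R vf c t x
        - (2 * (\<nu> - c)) *\<^sub>R divM (\<lambda>s y. h_eps \<gamma> \<epsilon> (\<rho> s y) *\<^sub>R symgrad (vf c) s y) t x
        - (2 * \<nu> - c) *\<^sub>R grad (\<lambda>s y. g_eps \<gamma> \<epsilon> (\<rho> s y) * divg (vf c) s y) t x
        - (\<kappa>\<^sup>2 - 2 * \<nu> * c + c\<^sup>2) *\<^sub>R divK \<gamma> \<epsilon> \<rho> t x = 0"
proof (rule iffD2[OF vec_eq_iff], rule allI)
  fix i
  define dtu where "dtu = dt (\<lambda>s y. \<rho> s y *\<^sub>R u s y) t x $ i"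
  define aA where "aA = pd i (\<lambda>s y. H1 s y * D0 s y) t x"
  define SB where "SB = (\<Sum>j\<in>UNIV. pd j (\<lambda>s y. \<rho> s y * (U i s y * U j s y)) t x)"
  define SE where "SE = (\<Sum>j\<in>UNIV. pd j (\<lambda>s y. U i s y * pd j H s y + pd i H s y * U j s y) t x)"
  define SF where "SF = (\<Sum>j\<in>UNIV. pd j (\<lambda>s y. pd i \<Phi> s y * pd j H s y) t x)"
  define SL where "SL = (\<Sum>j\<in>UNIV. pd j (pd j (\<lambda>s y. H s y * U i s y)) t x)"
  define SM where "SM = (\<Sum>j\<in>UNIV. pd j (pd j (\<lambda>s y. H s y * pd i \<Phi> s y)) t x)"
  define SN where "SN = (\<Sum>j\<in>UNIV. pd j (\<lambda>s y. H s y * ((pd j (U i) s y + pd i (U j) s y) / 2)) t x)"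
  define SO where "SO = (\<Sum>j\<in>UNIV. pd j (\<lambda>s y. H s y * ((pd j (pd i \<Phi>) s y + pd i (pd j \<Phi>) s y) / 2)) t x)"
  define pGu where "pGu = pd i (\<lambda>s y. G s y * divg u s y) t x"
  define pGW where "pGW = pd i (\<lambda>s y. G s y * dW0 s y) t x"
  define g1 where "g1 = pd i (\<lambda>s y. \<rho> s y powr \<gamma>) t x"
  define gPP where "gPP = pd i (\<lambda>s y. p (\<rho> s y)) t x"
  define K where "K = divK \<gamma> \<epsilon> \<rho> t x $ i"
  define Pt where "Pt = ptil_eps \<epsilon> (\<rho> t x)"
  define Ui where "Ui = U i t x"
  define Wi where "Wi = pd i \<Phi> t x"
  define m where "m = mu \<nu> \<kappa>"
  have m0: "m \<noteq> 0" using mupos by (simp add: m_def)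
  have momi: "dtu + SB - 2 * \<nu> * (SN + pGu) + (g1 + gPP) + Pt * Ui = \<kappa>\<^sup>2 * K"
  proof -
    have "(dt (\<lambda>s y. \<rho> s y *\<^sub>R u s y) t x
        + divM (\<lambda>s y. \<rho> s y *\<^sub>R outer (u s y) (u s y)) t x
        - (2 * \<nu>) *\<^sub>R divM (stress \<gamma> \<epsilon> \<rho> u) t x
        + grad (\<lambda>s y. \<rho> s y powr \<gamma> + p (\<rho> s y)) t x
        + ptil_eps \<epsilon> (\<rho> t x) *\<^sub>R u t x) $ i = (\<kappa>\<^sup>2 *\<^sub>R divK \<gamma> \<epsilon> \<rho> t x) $ i"
      using mom t by simp
    thus ?thesis
      unfolding dtu_def SB_def SN_def pGu_def g1_def gPP_def Pt_def Ui_def K_def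
      using Mu[OF t, where i=i and x=x] Mst[OF t, where i=i and x=x] Mg[OF t, where i=i and x=x] by simp
  qed
  have Xf: "2 * SN + SE - SL + pGu - aA = 0"
  proof -
    have "2 * SN + SE - SL = (\<Sum>j\<in>UNIV. pd i (pd j (\<lambda>s y. H s y * U j s y)) t x)"
      unfolding SN_def SE_def SL_def Xj[OF t, where i=i and x=x, symmetric]
      by (simp add: sum.distrib sum_subtractf sum_distrib_left)
    thus ?thesis using X0[OF mass t, where i=i and x=x] unfolding pGu_def aA_def by simp
  qed
  have Yf: "SF + SO - SM = 0"
  proof -
    have "SF + SO - SM = (\<Sum>j\<in>UNIV. pd j (\<lambda>s y. pd i \<Phi> s y * pd j H s y) t x
       + pd j (\<lambda>s y. H s y * ((pd j (pd i \<Phi>) s y + pd i (pd j \<Phi>) s y) / 2)) t x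
       - pd j (pd j (\<lambda>s y. H s y * pd i \<Phi> s y)) t x)"
      unfolding SF_def SO_def SM_def by (simp add: sum.distrib sum_subtractf)
    also have "\<dots> = 0" using Y2j[OF t, where i=i and x=x] by simp
    finally show ?thesis .
  qed
  have Zf: "K - SO - pGW = 0"
    using Zlem[OF t, where i=i and x=x] unfolding K_def SO_def pGW_def by simp
  have Pf: "Pt * (c * Wi) = c / m * gPP"
    using gP[OF t, where c=c and i=i and x=x] unfolding Pt_def Wi_def m_def gPP_def by simp
  have lam: "(m - c) / m * gPP + c / m * gPP = gPP" using m0 by (simp add: field_simps)
  have comp: "(dt (\<lambda>s y. \<rho> s y *\<^sub>R vf c s y) t x
        + divM (\<lambda>s y. \<rho> s y *\<^sub>R outer (vf c s y) (vf c s y)) t x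
        + grad (\<lambda>s y. \<rho> s y powr \<gamma>) t x
        + ((mu \<nu> \<kappa> - c) / mu \<nu> \<kappa>) *\<^sub>R grad (\<lambda>s y. p (\<rho> s y)) t x
        - c *\<^sub>R lap (\<lambda>s y. h_eps \<gamma> \<epsilon> (\<rho> s y) *\<^sub>R vf c s y) t x
        + ptil_eps \<epsilon> (\<rho> t x) *\<^sub>R vf c t x
        - (2 * (\<nu> - c)) *\<^sub>R divM (\<lambda>s y. h_eps \<gamma> \<epsilon> (\<rho> s y) *\<^sub>R symgrad (vf c) s y) t x
        - (2 * \<nu> - c) *\<^sub>R grad (\<lambda>s y. g_eps \<gamma> \<epsilon> (\<rho> s y) * divg (vf c) s y) t x
        - (\<kappa>\<^sup>2 - 2 * \<nu> * c + c\<^sup>2) *\<^sub>R divK \<gamma> \<epsilon> \<rho> t x) $ i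
     = (dtu - c * aA) + (SB + c * SE + c^2 * SF) + g1 + (m - c) / m * gPP
       - c * (SL + c * SM) + Pt * (Ui + c * Wi) - (2 * (\<nu> - c)) * (SN + c * SO)
       - (2 * \<nu> - c) * (pGu + c * pGW) - (\<kappa>\<^sup>2 - 2 * \<nu> * c + c\<^sup>2) * K"
    unfolding dtu_def aA_def SB_def SE_def SF_def SL_def SM_def SN_def SO_def pGu_def pGW_def g1_def gPP_def
      K_def Pt_def Ui_def Wi_def m_def
    using T1[OF mass t, where c=c and i=i and x=x] T2[OF t, where c=c and i=i and x=x] T5[OF t, where c=c and i=i and x=x] T7[OF t, where c=c and i=i and x=x] T8[OF t, where c=c and i=i and x=x]
    by (simp add: grad_nth vcomp)
  have "(dtu - c * aA) + (SB + c * SE + c^2 * SF) + g1 + (m - c) / m * gPP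
       - c * (SL + c * SM) + Pt * (Ui + c * Wi) - (2 * (\<nu> - c)) * (SN + c * SO)
       - (2 * \<nu> - c) * (pGu + c * pGW) - (\<kappa>\<^sup>2 - 2 * \<nu> * c + c\<^sup>2) * K
     = (dtu + SB - 2 * \<nu> * (SN + pGu) + (g1 + gPP) + Pt * Ui - \<kappa>\<^sup>2 * K)
       + c * (2 * SN + SE - SL + pGu - aA) + c^2 * (SF + SO - SM) + (2 * \<nu> * c - c^2) * (K - SO - pGW)
       + ((m - c) / m * gPP + Pt * (c * Wi) - gPP)"
    by (simp add: algebra_simps power2_eq_square)
  also have "\<dots> = 0" using momi Xf Yf Zf Pf lam by simp
  finally show "(dt (\<lambda>s y. \<rho> s y *\<^sub>R vf c s y) t x
        + divM (\<lambda>s y. \<rho> s y *\<^sub>R outer (vf c s y) (vf c s y)) t x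
        + grad (\<lambda>s y. \<rho> s y powr \<gamma>) t x
        + ((mu \<nu> \<kappa> - c) / mu \<nu> \<kappa>) *\<^sub>R grad (\<lambda>s y. p (\<rho> s y)) t x
        - c *\<^sub>R lap (\<lambda>s y. h_eps \<gamma> \<epsilon> (\<rho> s y) *\<^sub>R vf c s y) t x
        + ptil_eps \<epsilon> (\<rho> t x) *\<^sub>R vf c t x
        - (2 * (\<nu> - c)) *\<^sub>R divM (\<lambda>s y. h_eps \<gamma> \<epsilon> (\<rho> s y) *\<^sub>R symgrad (vf c) s y) t x
        - (2 * \<nu> - c) *\<^sub>R grad (\<lambda>s y. g_eps \<gamma> \<epsilon> (\<rho> s y) * divg (vf c) s y) t x
        - (\<kappa>\<^sup>2 - 2 * \<nu> * c + c\<^sup>2) *\<^sub>R divK \<gamma> \<epsilon> \<rho> t x) $ i = 0 $ i"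
    using comp by simp
qed

end

theorem lemma3p2:
  fixes \<rho> :: "real \<Rightarrow> real^'n \<Rightarrow> real" and u :: "real \<Rightarrow> real^'n \<Rightarrow> real^'n"
    and \<phi> p :: "real \<Rightarrow> real"
    and \<nu> \<kappa> \<gamma> \<epsilon> c T :: real
  assumes dim: "CARD('n) = 2 \<or> CARD('n) = 3"
    and par: "0 < \<kappa>" "\<kappa> < \<nu>" "1 < \<gamma>" "0 < \<epsilon>" "0 < c" "0 < T"
    and phi: "\<forall>r>0. \<exists>D. (\<phi> has_real_derivative D) (at r) \<and> r * D = hp_eps \<gamma> \<epsilon> r"
    and pder: "\<forall>r>0. (p has_real_derivative
                 mu \<nu> \<kappa> * ptil_eps \<epsilon> r * hp_eps \<gamma> \<epsilon> r / r) (at r)"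
    and smooth: "smooth_st {0<..<T} \<rho>" "smooth_st {0<..<T} u"
    and per: "periodic_field \<rho>" "periodic_field u"
    and pos: "\<forall>t x. 0 < \<rho> t x"
    and mass: "\<forall>t\<in>{0<..<T}. \<forall>x.
        dt \<rho> t x + divg (\<lambda>s y. \<rho> s y *\<^sub>R u s y) t x = 0"
    and mom: "\<forall>t\<in>{0<..<T}. \<forall>x.
        dt (\<lambda>s y. \<rho> s y *\<^sub>R u s y) t x
        + divM (\<lambda>s y. \<rho> s y *\<^sub>R outer (u s y) (u s y)) t x
        - (2 * \<nu>) *\<^sub>R divM (stress \<gamma> \<epsilon> \<rho> u) t x
        + grad (\<lambda>s y. \<rho> s y powr \<gamma> + p (\<rho> s y)) t x
        + ptil_eps \<epsilon> (\<rho> t x) *\<^sub>R u t x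
        = \<kappa>\<^sup>2 *\<^sub>R divK \<gamma> \<epsilon> \<rho> t x"
  defines "v \<equiv> (\<lambda>t x. u t x + c *\<^sub>R grad (\<lambda>s y. \<phi> (\<rho> s y)) t x)"
  shows "(\<forall>t\<in>{0<..<T}. \<forall>x.
        dt \<rho> t x + divg (\<lambda>s y. \<rho> s y *\<^sub>R v s y) t x
          = c * lap (\<lambda>s y. h_eps \<gamma> \<epsilon> (\<rho> s y)) t x)
    \<and> (\<forall>t\<in>{0<..<T}. \<forall>x.
        dt (\<lambda>s y. \<rho> s y *\<^sub>R v s y) t x
        + divM (\<lambda>s y. \<rho> s y *\<^sub>R outer (v s y) (v s y)) t x
        + grad (\<lambda>s y. \<rho> s y powr \<gamma>) t x
        + ((mu \<nu> \<kappa> - c) / mu \<nu> \<kappa>) *\<^sub>R grad (\<lambda>s y. p (\<rho> s y)) t x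
        - c *\<^sub>R lap (\<lambda>s y. h_eps \<gamma> \<epsilon> (\<rho> s y) *\<^sub>R v s y) t x
        + ptil_eps \<epsilon> (\<rho> t x) *\<^sub>R v t x
        - (2 * (\<nu> - c)) *\<^sub>R divM (\<lambda>s y. h_eps \<gamma> \<epsilon> (\<rho> s y) *\<^sub>R symgrad v s y) t x
        - (2 * \<nu> - c) *\<^sub>R grad (\<lambda>s y. g_eps \<gamma> \<epsilon> (\<rho> s y) * divg v s y) t x
        - (\<kappa>\<^sup>2 - 2 * \<nu> * c + c\<^sup>2) *\<^sub>R divK \<gamma> \<epsilon> \<rho> t x = 0)"
proof -
  interpret sys \<rho> u \<phi> p \<nu> \<kappa> \<gamma> \<epsilon> T
    by unfold_locales (use par phi pder smooth pos in auto)
  show ?thesis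
    unfolding v_def
    by (intro conjI ballI allI mass_v[OF mass] mom_v[OF mass mom])
qed

end
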